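(* For every positive integer $\ell$ and every integer $n\ge n_0:=3\ell+4$, there is a directed tree with $n$ vertices, in which every vertex has degree at most three and every directed path has length at most $\ell$, whose span is at least $\lceil(\ell+1)/2\rceil=\lceil(n_0-1)/6\rceil$.
   Context: A directed tree is a DAG (directed acyclic graph) whose underlying undirected graph is a tree. An upward-planar layered drawing of a DAG $G$ maps each vertex $v$ to a point in the plane whose y-coordinate $y(v)$ is an integer, and each edge $(u,v)$ (directed from tail $u$ to head $v$) to a strictly y-monotone curve going upward from $u$ to $v$ (so $y(u)<y(v)$), such that no two edges intersect except at common endpoints. The span of an edge $(u,v)$ in such a drawing $\Gamma$ is $y(v)-y(u)$; the span of $\Gamma$ is the maximum span of its edges; the span of an upward-planar DAG $G$ is the minimum span over all its upward-planar layered drawings. The degree of a vertex is its total number of incident edges. The length of a directed path is its number of edges. *)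

theory Defs
  imports "HOL-Analysis.Analysis"
begin

text \<open>Directed tree: a DAG whose underlying undirected graph is a (simple) tree,
  i.e. no loops, no pair of opposite arcs, connected, and |E| = |V| - 1.\<close>
definition directed_tree :: "'a set \<Rightarrow> ('a \<times> 'a) set \<Rightarrow> bool" where
  "directed_tree V E \<longleftrightarrow>
     finite V \<and> V \<noteq> {} \<and> E \<subseteq> V \<times> V \<and>
     acyclic E \<and>
     (\<forall>u v. (u, v) \<in> E \<longrightarrow> (v, u) \<notin> E) \<and>
     (\<forall>u\<in>V. \<forall>v\<in>V. (u, v) \<in> (E \<union> E\<inverse>)\<^sup>*) \<and>
     card E + 1 = card V"

definition degree :: "('a \<times> 'a) set \<Rightarrow> 'a \<Rightarrow> nat" where
  "degree E v = card {e \<in> E. fst e = v \<or> snd e = v}"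

definition vpos :: "('a \<Rightarrow> real) \<Rightarrow> ('a \<Rightarrow> int) \<Rightarrow> 'a \<Rightarrow> real \<times> real" where
  "vpos x y v = (x v, real_of_int (y v))"

definition upward_layered_drawing ::
  "'a set \<Rightarrow> ('a \<times> 'a) set \<Rightarrow> ('a \<Rightarrow> real) \<Rightarrow> ('a \<Rightarrow> int)
     \<Rightarrow> ('a \<times> 'a \<Rightarrow> real \<Rightarrow> real \<times> real) \<Rightarrow> bool" where
  "upward_layered_drawing V E x y c \<longleftrightarrow>
     inj_on (vpos x y) V \<and>
     (\<forall>e\<in>E. path (c e) \<and> pathstart (c e) = vpos x y (fst e) \<and>
              pathfinish (c e) = vpos x y (snd e) \<and>
              (\<forall>s t. 0 \<le> s \<and> s < t \<and> t \<le> 1 \<longrightarrow> snd (c e s) < snd (c e t))) \<and>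
     (\<forall>e\<in>E. \<forall>w\<in>V. vpos x y w \<in> path_image (c e) \<longrightarrow> w = fst e \<or> w = snd e) \<and>
     (\<forall>e\<in>E. \<forall>e'\<in>E. e \<noteq> e' \<longrightarrow>
        path_image (c e) \<inter> path_image (c e') \<subseteq>
          vpos x y ` ({fst e, snd e} \<inter> {fst e', snd e'}))"

definition upward_planar :: "'a set \<Rightarrow> ('a \<times> 'a) set \<Rightarrow> bool" where
  "upward_planar V E \<longleftrightarrow> (\<exists>x y c. upward_layered_drawing V E x y c)"

definition drawing_span :: "('a \<times> 'a) set \<Rightarrow> ('a \<Rightarrow> int) \<Rightarrow> nat" where
  "drawing_span E y = Max (insert 0 ((\<lambda>(u, v). nat (y v - y u)) ` E))"

definition dag_span :: "'a set \<Rightarrow> ('a \<times> 'a) set \<Rightarrow> nat" where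
  "dag_span V E = (LEAST s. \<exists>x y c. upward_layered_drawing V E x y c \<and> drawing_span E y = s)"

end

theory Submission
  imports Defs
begin

definition mcurve :: "(real \<Rightarrow> real \<times> real) \<Rightarrow> bool" where
  "mcurve g \<longleftrightarrow> path g \<and> (\<forall>s t. 0 \<le> s \<and> s < t \<and> t \<le> 1 \<longrightarrow> snd (g s) < snd (g t))"

definition prm :: "(real \<Rightarrow> real \<times> real) \<Rightarrow> real \<Rightarrow> real" where
  "prm g t = (THE u. u \<in> {0..1} \<and> snd (g u) = t)"

definition lev :: "(real \<Rightarrow> real \<times> real) \<Rightarrow> real \<Rightarrow> real" where
  "lev g t = fst (g (prm g t))"

lemma mc_le:
  assumes "mcurve g" "0 \<le> s" "s \<le> t" "t \<le> 1"
  shows "snd (g s) \<le> snd (g t)"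
  using assms unfolding mcurve_def by (cases "s = t") (auto intro: less_imp_le)

lemma mc_inj:
  assumes "mcurve g" "u1 \<in> {0..1}" "u2 \<in> {0..1}" "snd (g u1) = snd (g u2)"
  shows "u1 = u2"
proof (rule ccontr)
  assume "u1 \<noteq> u2"
  then consider "u1 < u2" | "u2 < u1" by linarith
  then show False using assms unfolding mcurve_def by cases (auto, fastforce+)
qed

lemma mc_cont_snd:
  assumes "mcurve g" shows "continuous_on {0..1} (\<lambda>u. snd (g u))"
proof -
  have "continuous_on {0..1} g" using assms unfolding mcurve_def path_def by auto
  then show ?thesis by (intro continuous_intros)
qed

lemma mc_ex:
  assumes "mcurve g" "snd (g 0) \<le> t" "t \<le> snd (g 1)"
  shows "\<exists>u\<in>{0..1}. snd (g u) = t"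
  using IVT'[of "\<lambda>u. snd (g u)" 0 t 1] mc_cont_snd[OF assms(1)] assms by auto

lemma prm:
  assumes "mcurve g" "snd (g 0) \<le> t" "t \<le> snd (g 1)"
  shows "prm g t \<in> {0..1} \<and> snd (g (prm g t)) = t"
proof -
  have "\<exists>!u. u \<in> {0..1} \<and> snd (g u) = t"
    using mc_ex[OF assms] mc_inj[OF assms(1)] by blast
  then show ?thesis unfolding prm_def by (rule theI')
qed

lemma prm_eq:
  assumes "mcurve g" "u \<in> {0..1}"
  shows "prm g (snd (g u)) = u"
  unfolding prm_def
  by (rule the_equality) (use assms mc_inj[OF assms(1)] in auto)

lemma lev_mem:
  assumes "mcurve g" "snd (g 0) \<le> t" "t \<le> snd (g 1)"
  shows "(lev g t, t) \<in> path_image g"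
proof -
  have "g (prm g t) = (lev g t, t)" using prm[OF assms] unfolding lev_def
    by (metis prod.collapse)
  then show ?thesis using prm[OF assms] unfolding path_image_def by (metis image_eqI)
qed

lemma lev_pt:
  assumes "mcurve g" "p \<in> path_image g"
  shows "lev g (snd p) = fst p \<and> snd (g 0) \<le> snd p \<and> snd p \<le> snd (g 1)"
proof -
  obtain u where u: "u \<in> {0..1}" "p = g u" using assms(2) unfolding path_image_def by auto
  have "prm g (snd p) = u" using prm_eq[OF assms(1) u(1)] u by simp
  then show ?thesis using u mc_le[OF assms(1)] unfolding lev_def by auto
qed

lemma lev_cont:
  assumes "mcurve g"
  shows "continuous_on {snd (g 0)..snd (g 1)} (lev g)"
proof -
  have img: "(\<lambda>u. snd (g u)) ` {0..1} = {snd (g 0)..snd (g 1)}"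
  proof
    show "(\<lambda>u. snd (g u)) ` {0..1} \<subseteq> {snd (g 0)..snd (g 1)}"
      using mc_le[OF assms] by auto
    show "{snd (g 0)..snd (g 1)} \<subseteq> (\<lambda>u. snd (g u)) ` {0..1}"
      using mc_ex[OF assms] by force
  qed
  have c1: "continuous_on {snd (g 0)..snd (g 1)} (prm g)"
    using continuous_on_inv[OF mc_cont_snd[OF assms], of "prm g"] prm_eq[OF assms] img
    by auto
  have cg: "continuous_on {0..1} g" using assms unfolding mcurve_def path_def by auto
  have "continuous_on {snd (g 0)..snd (g 1)} (g \<circ> prm g)"
    apply (rule continuous_on_compose[OF c1])
    apply (rule continuous_on_subset[OF cg])
    using prm[OF assms] by auto
  then have "continuous_on {snd (g 0)..snd (g 1)} (\<lambda>t. fst ((g \<circ> prm g) t))"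
    by (rule continuous_on_fst)
  then show ?thesis unfolding lev_def comp_def by simp
qed

lemma sign_keep:
  assumes g: "mcurve g" and h: "mcurve h" and ab: "a \<le> b"
    and r: "snd (g 0) \<le> a" "b \<le> snd (g 1)" "snd (h 0) \<le> a" "b \<le> snd (h 1)"
    and ne: "\<forall>t\<in>{a..b}. lev g t \<noteq> lev h t"
    and lt: "lev g a < lev h a"
  shows "lev g b < lev h b"
proof (rule ccontr)
  assume "\<not> lev g b < lev h b"
  then have fb: "lev h b - lev g b \<le> 0" by simp
  have "continuous_on {a..b} (\<lambda>t. lev h t - lev g t)"
    apply (intro continuous_intros)
     apply (rule continuous_on_subset[OF lev_cont[OF h]]) using r apply auto[1]
    apply (rule continuous_on_subset[OF lev_cont[OF g]]) using r by auto
  then obtain t where "t \<ge> a" "t \<le> b" "lev h t - lev g t = 0"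
    using IVT2'[of "\<lambda>t. lev h t - lev g t" b 0 a] fb lt ab by auto
  then show False using ne[rule_format, of t] by auto
qed

lemma lev_ne:
  assumes "mcurve g" "mcurve h" "snd (g 0) \<le> t" "t \<le> snd (g 1)" "snd (h 0) \<le> t" "t \<le> snd (h 1)"
    and "\<forall>p \<in> path_image g \<inter> path_image h. snd p \<noteq> t"
  shows "lev g t \<noteq> lev h t"
  using lev_mem[OF assms(1,3,4)] lev_mem[OF assms(2,5,6)] assms(7) by force

lemma keep:
  assumes g: "mcurve g" and h: "mcurve h" and ab: "a \<le> b"
    and r: "snd (g 0) \<le> a" "b \<le> snd (g 1)" "snd (h 0) \<le> a" "b \<le> snd (h 1)"
    and d: "\<forall>p \<in> path_image g \<inter> path_image h. snd p < a \<or> snd p > b"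
    and lt: "lev g a < lev h a"
  shows "lev g b < lev h b"
proof (rule sign_keep[OF g h ab r _ lt], rule ballI)
  fix t assume t: "t \<in> {a..b}"
  show "lev g t \<noteq> lev h t"
  proof (rule lev_ne[OF g h])
    show "\<forall>p\<in>path_image g \<inter> path_image h. snd p \<noteq> t"
    proof
      fix p assume "p \<in> path_image g \<inter> path_image h"
      with d have "snd p < a \<or> snd p > b" by blast
      with t show "snd p \<noteq> t" by auto
    qed
  qed (use t r in auto)
qed

lemma core:
  fixes E G :: "nat \<Rightarrow> real \<Rightarrow> real \<times> real" and U :: "real \<times> real" and P :: "nat \<Rightarrow> real \<times> real"
  assumes mE: "\<forall>i<3. mcurve (E i)" and mG: "\<forall>i<3. mcurve (G i)"
    and Es: "\<forall>i<3. E i 0 = U" and Ef: "\<forall>i<3. E i 1 = P i"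
    and hP: "\<forall>i<3. snd U < snd (P i)"
    and Glo: "\<forall>i<3. snd (G i 0) \<le> snd U" and Ghi: "\<forall>i<3. \<forall>j<3. snd (P j) \<le> snd (G i 1)"
    and PG: "\<forall>i<3. P i \<in> path_image (G i)"
    and EE: "\<forall>i<3. \<forall>j<3. i \<noteq> j \<longrightarrow> path_image (E i) \<inter> path_image (E j) \<subseteq> {U}"
    and GE: "\<forall>i<3. \<forall>j<3. i \<noteq> j \<longrightarrow> path_image (G i) \<inter> path_image (E j) = {}"
    and GEi: "\<forall>i<3. path_image (G i) \<inter> path_image (E i) \<subseteq> {P i}"
    and GG: "\<forall>i<3. \<forall>j<3. i \<noteq> j \<longrightarrow> path_image (G i) \<inter> path_image (G j) = {}"
    and UG: "\<forall>i<3. U \<notin> path_image (G i)"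
  shows False
proof -
  define uy where "uy = snd U"
  define h where "h i = snd (P i)" for i
  define hm where "hm = min (h 0) (min (h 1) (h 2))"
  define t0 where "t0 = (uy + hm) / 2"
  have hall: "hm \<le> h i" if "i < 3" for i
  proof -
    have "i = 0 \<or> i = 1 \<or> i = 2" using that by auto
    then show ?thesis unfolding hm_def by (elim disjE) auto
  qed
  have hmu: "uy < hm" using hP unfolding hm_def h_def uy_def
    by (auto simp: numeral_3_eq_3)
  have t0a: "uy < t0" "\<And>i. i < 3 \<Longrightarrow> t0 < h i" using hall hmu unfolding t0_def by force+
  have Elo: "\<And>i. i < 3 \<Longrightarrow> snd (E i 0) = uy" using Es uy_def by auto
  have Ehi: "\<And>i. i < 3 \<Longrightarrow> snd (E i 1) = h i" using Ef h_def by auto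
  have Glo': "\<And>i. i < 3 \<Longrightarrow> snd (G i 0) \<le> uy" using Glo uy_def by auto
  have Ghi': "\<And>i j. i < 3 \<Longrightarrow> j < 3 \<Longrightarrow> h j \<le> snd (G i 1)" using Ghi h_def by auto
  have Gt0: "\<And>i. i < 3 \<Longrightarrow> t0 \<le> snd (G i 1)"
    using Ghi'[of _ 0] t0a(2)[of 0] by force
  have GloT: "\<And>i. i < 3 \<Longrightarrow> snd (G i 0) \<le> t0"
    using Glo' t0a(1) by force
  have GloH: "\<And>i j. i < 3 \<Longrightarrow> j < 3 \<Longrightarrow> snd (G i 0) \<le> h j"
    using Glo' t0a hmu hall by force
  have EloH: "\<And>i j. i < 3 \<Longrightarrow> j < 3 \<Longrightarrow> snd (E i 0) \<le> h j"
    using Elo t0a hmu hall by force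
  have EloT: "\<And>i. i < 3 \<Longrightarrow> snd (E i 0) \<le> t0"
    using Elo t0a by force
  have UE: "\<And>i. i < 3 \<Longrightarrow> U \<in> path_image (E i)"
    using Es unfolding path_image_def by (metis atLeastAtMost_iff image_eqI zero_le_one order_refl)
  have levEU: "\<And>i. i < 3 \<Longrightarrow> lev (E i) uy = fst U"
    using lev_pt[OF mE[rule_format] UE] uy_def by auto
  have PE: "\<And>i. i < 3 \<Longrightarrow> P i \<in> path_image (E i)"
    using Ef unfolding path_image_def by (metis atLeastAtMost_iff image_eqI zero_le_one order_refl)
  have levEP: "\<And>i. i < 3 \<Longrightarrow> lev (E i) (h i) = fst (P i)"
    using lev_pt[OF mE[rule_format] PE] h_def by auto
  have levGP: "\<And>i. i < 3 \<Longrightarrow> lev (G i) (h i) = fst (P i)"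
    using lev_pt[OF mG[rule_format] PG[rule_format]] h_def by auto
  have levGU: "\<And>i. i < 3 \<Longrightarrow> lev (G i) uy \<noteq> fst U"
  proof
    fix i assume i: "i < 3" and eq: "lev (G i) uy = fst U"
    have "(lev (G i) uy, uy) \<in> path_image (G i)"
      apply (rule lev_mem[OF mG[rule_format, OF i]])
      using Glo'[OF i] Ghi'[OF i i] t0a(1) t0a(2)[OF i] i by auto
    then show False using eq UG i uy_def by (metis prod.collapse)
  qed
  have stepA: "(lev (G m) uy < fst U) = (lev (G m) t0 < lev (E i) t0)"
    if m: "m < 3" and i: "i < 3" for m i
  proof -
    have d: "\<forall>p \<in> path_image (G m) \<inter> path_image (E i). snd p < uy \<or> snd p > t0"
    proof
      fix p assume p: "p \<in> path_image (G m) \<inter> path_image (E i)"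
      have "p = P i" using p GE GEi m i by (cases "m = i") auto
      then show "snd p < uy \<or> snd p > t0" using t0a i h_def by auto
    qed
    have d': "\<forall>p \<in> path_image (E i) \<inter> path_image (G m). snd p < uy \<or> snd p > t0"
      using d by blast
    have r: "snd (G m 0) \<le> uy" "t0 \<le> snd (G m 1)" "snd (E i 0) \<le> uy" "t0 \<le> snd (E i 1)"
      using Glo'[OF m] Gt0[OF m] Elo[OF i] Ehi[OF i] t0a(2)[OF i] by auto
    show ?thesis
    proof
      assume "lev (G m) uy < fst U"
      then show "lev (G m) t0 < lev (E i) t0"
        using keep[OF mG[rule_format, OF m] mE[rule_format, OF i] _ r d] t0a levEU i by auto
    next
      assume a: "lev (G m) t0 < lev (E i) t0"
      show "lev (G m) uy < fst U"
      proof (rule ccontr)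
        assume "\<not> lev (G m) uy < fst U"
        then have "lev (E i) uy < lev (G m) uy" using levGU[OF m] levEU[OF i] by auto
        then have "lev (E i) t0 < lev (G m) t0"
          using keep[OF mE[rule_format, OF i] mG[rule_format, OF m] _ _ _ _ _ d'] r t0a by auto
        then show False using a by auto
      qed
    qed
  qed
  have Edist: "lev (E i) t0 \<noteq> lev (E j) t0" if "i < 3" "j < 3" "i \<noteq> j" for i j
  proof (rule lev_ne[OF mE[rule_format] mE[rule_format]])
    show "\<forall>p\<in>path_image (E i) \<inter> path_image (E j). snd p \<noteq> t0"
      using EE that t0a(1) uy_def by fastforce
  qed (use that Elo Ehi t0a in \<open>auto intro: less_imp_le\<close>)
  have EEd: "\<forall>p \<in> path_image (E i) \<inter> path_image (E j). snd p < t0 \<or> snd p > b"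
    if "i < 3" "j < 3" "i \<noteq> j" for i j b
    using EE that t0a uy_def by fastforce
  have GGd: "\<forall>p \<in> path_image (G i) \<inter> path_image (G j). snd p < a \<or> snd p > b"
    if "i < 3" "j < 3" "i \<noteq> j" for i j a b
    using GG that by blast
  have GEd: "\<forall>p \<in> path_image (G i) \<inter> path_image (E j). snd p < a \<or> snd p > b"
    "\<forall>p \<in> path_image (E j) \<inter> path_image (G i). snd p < a \<or> snd p > b"
    if "i < 3" "j < 3" "i \<noteq> j" for i j a b
    using GE that by blast+
  have left: False if l: "l < 3" and m: "m < 3" and lm: "l \<noteq> m"
     and a1: "lev (G m) t0 < lev (E l) t0" and a2: "lev (E l) t0 < lev (E m) t0" for l m
  proof (cases "h m \<le> h l")
    case True
    have q1: "lev (G m) (h m) < lev (E l) (h m)"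
      apply (rule keep[OF mG[rule_format, OF m] mE[rule_format, OF l] _ _ _ _ _ GEd(1)[OF m l] a1])
      using t0a(1) t0a(2)[OF m] t0a(2)[OF l] GloT[OF m] GloT[OF l] GloH[OF m m] GloH[OF l l] GloH[OF m l] GloH[OF l m] Ghi'[OF m m] Ghi'[OF m l] Ghi'[OF l m] Ghi'[OF l l] Gt0[OF m] Gt0[OF l] EloT[OF m] EloT[OF l] EloH[OF l l] EloH[OF m l] EloH[OF l m] EloH[OF m m] Ehi[OF m] Ehi[OF l] True lm by auto
    have q2: "lev (E l) (h m) < lev (E m) (h m)"
      apply (rule keep[OF mE[rule_format, OF l] mE[rule_format, OF m] _ _ _ _ _ EEd[OF l m lm] a2])
      using t0a(1) t0a(2)[OF m] t0a(2)[OF l] GloT[OF m] GloT[OF l] GloH[OF m m] GloH[OF l l] GloH[OF m l] GloH[OF l m] Ghi'[OF m m] Ghi'[OF m l] Ghi'[OF l m] Ghi'[OF l l] Gt0[OF m] Gt0[OF l] EloT[OF m] EloT[OF l] EloH[OF l l] EloH[OF m l] EloH[OF l m] EloH[OF m m] Ehi[OF m] Ehi[OF l] True lm by auto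
    show False using q1 q2 levEP[OF m] levGP[OF m] by auto
  next
    case False
    have q1: "lev (G m) (h l) < lev (E l) (h l)"
      apply (rule keep[OF mG[rule_format, OF m] mE[rule_format, OF l] _ _ _ _ _ GEd(1)[OF m l] a1])
      using t0a(1) t0a(2)[OF m] t0a(2)[OF l] GloT[OF m] GloT[OF l] GloH[OF m m] GloH[OF l l] GloH[OF m l] GloH[OF l m] Ghi'[OF m m] Ghi'[OF m l] Ghi'[OF l m] Ghi'[OF l l] Gt0[OF m] Gt0[OF l] EloT[OF m] EloT[OF l] EloH[OF l l] EloH[OF m l] EloH[OF l m] EloH[OF m m] Ehi[OF m] Ehi[OF l] False lm by auto
    then have q1p: "lev (G m) (h l) < lev (G l) (h l)" using levEP[OF l] levGP[OF l] by auto
    have q2: "lev (G m) (h m) < lev (G l) (h m)"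
      apply (rule keep[OF mG[rule_format, OF m] mG[rule_format, OF l] _ _ _ _ _ GGd[OF m l] q1p])
      using t0a(1) t0a(2)[OF m] t0a(2)[OF l] GloT[OF m] GloT[OF l] GloH[OF m m] GloH[OF l l] GloH[OF m l] GloH[OF l m] Ghi'[OF m m] Ghi'[OF m l] Ghi'[OF l m] Ghi'[OF l l] Gt0[OF m] Gt0[OF l] EloT[OF m] EloT[OF l] EloH[OF l l] EloH[OF m l] EloH[OF l m] EloH[OF m m] Ehi[OF m] Ehi[OF l] False lm by auto
    have q3: "lev (E l) (h l) < lev (E m) (h l)"
      apply (rule keep[OF mE[rule_format, OF l] mE[rule_format, OF m] _ _ _ _ _ EEd[OF l m lm] a2])
      using t0a(1) t0a(2)[OF m] t0a(2)[OF l] GloT[OF m] GloT[OF l] GloH[OF m m] GloH[OF l l] GloH[OF m l] GloH[OF l m] Ghi'[OF m m] Ghi'[OF m l] Ghi'[OF l m] Ghi'[OF l l] Gt0[OF m] Gt0[OF l] EloT[OF m] EloT[OF l] EloH[OF l l] EloH[OF m l] EloH[OF l m] EloH[OF m m] Ehi[OF m] Ehi[OF l] False lm by auto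
    then have q3p: "lev (G l) (h l) < lev (E m) (h l)" using levEP[OF l] levGP[OF l] by auto
    have q4: "lev (G l) (h m) < lev (E m) (h m)"
      apply (rule keep[OF mG[rule_format, OF l] mE[rule_format, OF m] _ _ _ _ _ GEd(1)[OF l m] q3p])
      using t0a(1) t0a(2)[OF m] t0a(2)[OF l] GloT[OF m] GloT[OF l] GloH[OF m m] GloH[OF l l] GloH[OF m l] GloH[OF l m] Ghi'[OF m m] Ghi'[OF m l] Ghi'[OF l m] Ghi'[OF l l] Gt0[OF m] Gt0[OF l] EloT[OF m] EloT[OF l] EloH[OF l l] EloH[OF m l] EloH[OF l m] EloH[OF m m] Ehi[OF m] Ehi[OF l] False lm by auto
    show False using q2 q4 levEP[OF m] levGP[OF m] by auto
  qed
  have right: False if l: "l < 3" and m: "m < 3" and lm: "l \<noteq> m"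
     and a1: "lev (E l) t0 < lev (G m) t0" and a2: "lev (E m) t0 < lev (E l) t0" for l m
  proof (cases "h m \<le> h l")
    case True
    have q1: "lev (E l) (h m) < lev (G m) (h m)"
      apply (rule keep[OF mE[rule_format, OF l] mG[rule_format, OF m] _ _ _ _ _ GEd(2)[OF m l] a1])
      using t0a(1) t0a(2)[OF m] t0a(2)[OF l] GloT[OF m] GloT[OF l] GloH[OF m m] GloH[OF l l] GloH[OF m l] GloH[OF l m] Ghi'[OF m m] Ghi'[OF m l] Ghi'[OF l m] Ghi'[OF l l] Gt0[OF m] Gt0[OF l] EloT[OF m] EloT[OF l] EloH[OF l l] EloH[OF m l] EloH[OF l m] EloH[OF m m] Ehi[OF m] Ehi[OF l] True lm by auto
    have q2: "lev (E m) (h m) < lev (E l) (h m)"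
      apply (rule keep[OF mE[rule_format, OF m] mE[rule_format, OF l] _ _ _ _ _ EEd[OF m l] a2])
      using t0a(1) t0a(2)[OF m] t0a(2)[OF l] GloT[OF m] GloT[OF l] GloH[OF m m] GloH[OF l l] GloH[OF m l] GloH[OF l m] Ghi'[OF m m] Ghi'[OF m l] Ghi'[OF l m] Ghi'[OF l l] Gt0[OF m] Gt0[OF l] EloT[OF m] EloT[OF l] EloH[OF l l] EloH[OF m l] EloH[OF l m] EloH[OF m m] Ehi[OF m] Ehi[OF l] True lm by auto
    show False using q1 q2 levEP[OF m] levGP[OF m] by auto
  next
    case False
    have q1: "lev (E l) (h l) < lev (G m) (h l)"
      apply (rule keep[OF mE[rule_format, OF l] mG[rule_format, OF m] _ _ _ _ _ GEd(2)[OF m l] a1])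
      using t0a(1) t0a(2)[OF m] t0a(2)[OF l] GloT[OF m] GloT[OF l] GloH[OF m m] GloH[OF l l] GloH[OF m l] GloH[OF l m] Ghi'[OF m m] Ghi'[OF m l] Ghi'[OF l m] Ghi'[OF l l] Gt0[OF m] Gt0[OF l] EloT[OF m] EloT[OF l] EloH[OF l l] EloH[OF m l] EloH[OF l m] EloH[OF m m] Ehi[OF m] Ehi[OF l] False lm by auto
    then have q1p: "lev (G l) (h l) < lev (G m) (h l)" using levEP[OF l] levGP[OF l] by auto
    have q2: "lev (G l) (h m) < lev (G m) (h m)"
      apply (rule keep[OF mG[rule_format, OF l] mG[rule_format, OF m] _ _ _ _ _ GGd[OF l m] q1p])
      using t0a(1) t0a(2)[OF m] t0a(2)[OF l] GloT[OF m] GloT[OF l] GloH[OF m m] GloH[OF l l] GloH[OF m l] GloH[OF l m] Ghi'[OF m m] Ghi'[OF m l] Ghi'[OF l m] Ghi'[OF l l] Gt0[OF m] Gt0[OF l] EloT[OF m] EloT[OF l] EloH[OF l l] EloH[OF m l] EloH[OF l m] EloH[OF m m] Ehi[OF m] Ehi[OF l] False lm by auto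
    have q3: "lev (E m) (h l) < lev (E l) (h l)"
      apply (rule keep[OF mE[rule_format, OF m] mE[rule_format, OF l] _ _ _ _ _ EEd[OF m l] a2])
      using t0a(1) t0a(2)[OF m] t0a(2)[OF l] GloT[OF m] GloT[OF l] GloH[OF m m] GloH[OF l l] GloH[OF m l] GloH[OF l m] Ghi'[OF m m] Ghi'[OF m l] Ghi'[OF l m] Ghi'[OF l l] Gt0[OF m] Gt0[OF l] EloT[OF m] EloT[OF l] EloH[OF l l] EloH[OF m l] EloH[OF l m] EloH[OF m m] Ehi[OF m] Ehi[OF l] False lm by auto
    then have q3p: "lev (E m) (h l) < lev (G l) (h l)" using levEP[OF l] levGP[OF l] by auto
    have q4: "lev (E m) (h m) < lev (G l) (h m)"
      apply (rule keep[OF mE[rule_format, OF m] mG[rule_format, OF l] _ _ _ _ _ GEd(2)[OF l m] q3p])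
      using t0a(1) t0a(2)[OF m] t0a(2)[OF l] GloT[OF m] GloT[OF l] GloH[OF m m] GloH[OF l l] GloH[OF m l] GloH[OF l m] Ghi'[OF m m] Ghi'[OF m l] Ghi'[OF l m] Ghi'[OF l l] Gt0[OF m] Gt0[OF l] EloT[OF m] EloT[OF l] EloH[OF l l] EloH[OF m l] EloH[OF l m] EloH[OF m m] Ehi[OF m] Ehi[OF l] False lm by auto
    show False using q2 q4 levEP[OF m] levGP[OF m] by auto
  qed
  have med: False if l: "l < 3" and m: "m < 3" and r: "r < 3" and lm: "l \<noteq> m" and rm: "r \<noteq> m"
    and o1: "lev (E l) t0 < lev (E m) t0" and o2: "lev (E m) t0 < lev (E r) t0" for l m r
  proof (cases "lev (G m) uy < fst U")
    case True
    then have "lev (G m) t0 < lev (E l) t0" using stepA[OF m l] by simp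
    then show False using left[OF l m lm _ o1] by simp
  next
    case False
    then have "\<not> lev (G m) t0 < lev (E r) t0" using stepA[OF m r] by simp
    moreover have "lev (G m) t0 \<noteq> lev (E r) t0"
    proof
      assume eq: "lev (G m) t0 = lev (E r) t0"
      have "(lev (G m) t0, t0) \<in> path_image (G m)"
        apply (rule lev_mem[OF mG[rule_format, OF m]])
        using GloT[OF m] Gt0[OF m] by auto
      moreover have "(lev (E r) t0, t0) \<in> path_image (E r)"
        apply (rule lev_mem[OF mE[rule_format, OF r]])
        using Elo Ehi t0a r by (auto intro: less_imp_le)
      ultimately have "(lev (G m) t0, t0) \<in> path_image (G m) \<inter> path_image (E r)" using eq by auto
      then have "(lev (G m) t0, t0) = P r" using GE GEi m r by (cases "m = r") auto
      then show False using t0a(2)[OF r] h_def by (metis snd_conv less_irrefl)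
    qed
    ultimately have "lev (E r) t0 < lev (G m) t0" by auto
    then show False using right[OF r m rm _ o2] by simp
  qed
  define a where "a i = lev (E i) t0" for i
  have M: "False" if "l<3" "m<3" "r<3" "l\<noteq>m" "r\<noteq>m" "a l < a m" "a m < a r" for l m r
    using med that unfolding a_def by blast
  have d01: "a 0 \<noteq> a 1" and d02: "a 0 \<noteq> a 2" and d12: "a 1 \<noteq> a 2"
    using Edist unfolding a_def by auto
  show False
  proof (cases "a 0 < a 1")
    case T1: True
    show False
    proof (cases "a 1 < a 2")
      case True then show False using M[of 0 1 2] T1 by simp
    next
      case False then have A: "a 2 < a 1" using d12 by auto
      show False
      proof (cases "a 0 < a 2")
        case True then show False using M[of 0 2 1] A by simp
      next
        case False then have "a 2 < a 0" using d02 by auto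
        then show False using M[of 2 0 1] T1 by simp
      qed
    qed
  next
    case F1: False then have B: "a 1 < a 0" using d01 by auto
    show False
    proof (cases "a 0 < a 2")
      case True then show False using M[of 1 0 2] B by simp
    next
      case False then have C: "a 2 < a 0" using d02 by auto
      show False
      proof (cases "a 1 < a 2")
        case True then show False using M[of 1 2 0] C by simp
      next
        case False then have "a 2 < a 1" using d12 by auto
        then show False using M[of 2 1 0] B by simp
      qed
    qed
  qed
qed

lemma join_mcurve:
  assumes g1: "mcurve g1" and g2: "mcurve g2" and e: "g1 1 = g2 0"
  shows "mcurve (g1 +++ g2)"
proof -
  have p: "path (g1 +++ g2)" using g1 g2 e unfolding mcurve_def
    by (simp add: path_join pathfinish_def pathstart_def)
  have m: "snd ((g1 +++ g2) s) < snd ((g1 +++ g2) t)" if st: "0 \<le> s" "s < t" "t \<le> 1" for s t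
  proof (cases "t \<le> 1/2")
    case True
    then show ?thesis using st g1 unfolding joinpaths_def mcurve_def by auto
  next
    case False
    note F = False
    show ?thesis
    proof (cases "s \<le> 1/2")
      case True
      have "snd (g1 (2 * s)) \<le> snd (g1 1)" by (rule mc_le[OF g1]) (use True st in auto)
      moreover have "snd (g2 0) < snd (g2 (2 * t - 1))"
        using g2 F st unfolding mcurve_def by auto
      ultimately show ?thesis using True F e unfolding joinpaths_def by auto
    next
      case False
      then show ?thesis using st g2 F unfolding joinpaths_def mcurve_def by auto
    qed
  qed
  show ?thesis using p m unfolding mcurve_def by blast
qed

fun chainc :: "('a \<times> 'a \<Rightarrow> real \<Rightarrow> real \<times> real) \<Rightarrow> (nat \<Rightarrow> 'a) \<Rightarrow> nat \<Rightarrow> real \<Rightarrow> real \<times> real" where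
  "chainc c f 0 = c (f 0, f 1)"
| "chainc c f (Suc k) = c (f 0, f 1) +++ chainc c (\<lambda>j. f (Suc j)) k"

lemma chainc_props:
  assumes "\<forall>j \<le> k. mcurve (c (f j, f (Suc j))) \<and> c (f j, f (Suc j)) 0 = Q (f j)
                \<and> c (f j, f (Suc j)) 1 = Q (f (Suc j))"
  shows "mcurve (chainc c f k) \<and> chainc c f k 0 = Q (f 0) \<and> chainc c f k 1 = Q (f (Suc k))
         \<and> path_image (chainc c f k) = (\<Union>j\<le>k. path_image (c (f j, f (Suc j))))"
  using assms
proof (induction k arbitrary: f)
  case 0
  then show ?case by simp
next
  case (Suc k)
  let ?f = "\<lambda>j. f (Suc j)"
  have IH: "mcurve (chainc c ?f k) \<and> chainc c ?f k 0 = Q (?f 0) \<and> chainc c ?f k 1 = Q (?f (Suc k))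
         \<and> path_image (chainc c ?f k) = (\<Union>j\<le>k. path_image (c (?f j, ?f (Suc j))))"
    apply (rule Suc.IH) using Suc.prems by auto
  have h0: "mcurve (c (f 0, f 1)) \<and> c (f 0, f 1) 0 = Q (f 0) \<and> c (f 0, f 1) 1 = Q (f 1)"
    using Suc.prems by (metis One_nat_def le0)
  have m: "mcurve (chainc c f (Suc k))"
    using join_mcurve[of "c (f 0, f 1)" "chainc c ?f k"] h0 IH by simp
  have s: "chainc c f (Suc k) 0 = Q (f 0)" using h0 by (simp add: joinpaths_def)
  have e: "chainc c f (Suc k) 1 = Q (f (Suc (Suc k)))" using IH by (simp add: joinpaths_def)
  have "path_image (chainc c f (Suc k)) = path_image (c (f 0, f 1)) \<union> path_image (chainc c ?f k)"
    using h0 IH by (simp add: path_image_join pathfinish_def pathstart_def)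
  also have "\<dots> = (\<Union>j\<le>Suc k. path_image (c (f j, f (Suc j))))"
    using IH by (simp add: atMost_Suc_eq_insert_0) 
  finally show ?case using m s e by simp
qed

lemma drawing_facts:
  assumes "upward_layered_drawing V E x y c"
  shows "\<And>e. e \<in> E \<Longrightarrow> mcurve (c e) \<and> c e 0 = vpos x y (fst e) \<and> c e 1 = vpos x y (snd e)"
    and "\<And>e w. e \<in> E \<Longrightarrow> w \<in> V \<Longrightarrow> vpos x y w \<in> path_image (c e) \<Longrightarrow> w = fst e \<or> w = snd e"
    and "\<And>e e'. e \<in> E \<Longrightarrow> e' \<in> E \<Longrightarrow> e \<noteq> e' \<Longrightarrow>
           path_image (c e) \<inter> path_image (c e') \<subseteq> vpos x y ` ({fst e, snd e} \<inter> {fst e', snd e'})"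
proof -
  note D = assms[unfolded upward_layered_drawing_def]
  have A: "\<forall>e\<in>E. path (c e) \<and> pathstart (c e) = vpos x y (fst e) \<and>
              pathfinish (c e) = vpos x y (snd e) \<and>
              (\<forall>s t. 0 \<le> s \<and> s < t \<and> t \<le> 1 \<longrightarrow> snd (c e s) < snd (c e t))"
    using D by (elim conjE)
  have B: "\<forall>e\<in>E. \<forall>w\<in>V. vpos x y w \<in> path_image (c e) \<longrightarrow> w = fst e \<or> w = snd e"
    using D by (elim conjE)
  have C: "\<forall>e\<in>E. \<forall>e'\<in>E. e \<noteq> e' \<longrightarrow>
        path_image (c e) \<inter> path_image (c e') \<subseteq> vpos x y ` ({fst e, snd e} \<inter> {fst e', snd e'})"
    using D by (elim conjE)
  show "\<And>e. e \<in> E \<Longrightarrow> mcurve (c e) \<and> c e 0 = vpos x y (fst e) \<and> c e 1 = vpos x y (snd e)"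
  proof -
    fix e assume "e \<in> E"
    then have "path (c e) \<and> pathstart (c e) = vpos x y (fst e) \<and>
              pathfinish (c e) = vpos x y (snd e) \<and>
              (\<forall>s t. 0 \<le> s \<and> s < t \<and> t \<le> 1 \<longrightarrow> snd (c e s) < snd (c e t))" using A by (rule bspec[rotated])
    then show "mcurve (c e) \<and> c e 0 = vpos x y (fst e) \<and> c e 1 = vpos x y (snd e)"
      unfolding mcurve_def pathstart_def pathfinish_def by (elim conjE) (intro conjI)
  qed
  show "\<And>e w. e \<in> E \<Longrightarrow> w \<in> V \<Longrightarrow> vpos x y w \<in> path_image (c e) \<Longrightarrow> w = fst e \<or> w = snd e"
    using B by blast
  show "\<And>e e'. e \<in> E \<Longrightarrow> e' \<in> E \<Longrightarrow> e \<noteq> e' \<Longrightarrow>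
           path_image (c e) \<inter> path_image (c e') \<subseteq> vpos x y ` ({fst e, snd e} \<inter> {fst e', snd e'})"
    using C by blast
qed

lemma edge_y:
  assumes "upward_layered_drawing V E x y c" "(a, b) \<in> E"
  shows "y a < y b"
proof -
  have "mcurve (c (a,b))" "c (a,b) 0 = vpos x y a" "c (a,b) 1 = vpos x y b"
    using drawing_facts(1)[OF assms] by auto
  then have "snd (c (a,b) 0) < snd (c (a,b) 1)"
    by (intro mcurve_def[THEN iffD1, OF \<open>mcurve (c (a,b))\<close>, THEN conjunct2, rule_format]) auto
  then show ?thesis using \<open>c (a,b) 0 = _\<close> \<open>c (a,b) 1 = _\<close> by (simp add: vpos_def)
qed

lemma chain_y:
  assumes "upward_layered_drawing V E x y c" "\<forall>j<K. (f j, f (Suc j)) \<in> E"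
    and "j1 \<le> j2" "j2 \<le> K"
  shows "y (f j1) + int (j2 - j1) \<le> y (f j2)"
  using assms(3,4)
proof (induction j2)
  case 0 then show ?case by simp
next
  case (Suc j)
  show ?case
  proof (cases "j1 = Suc j")
    case True then show ?thesis by simp
  next
    case False
    then have "j1 \<le> j" using Suc by auto
    then have "y (f j1) + int (j - j1) \<le> y (f j)" using Suc by auto
    moreover have "y (f j) < y (f (Suc j))" using edge_y[OF assms(1)] assms(2) Suc by auto
    ultimately show ?thesis using \<open>j1 \<le> j\<close> by (simp add: Suc_diff_le)
  qed
qed

lemma lower_generic:
  fixes u :: 'a and v :: "nat \<Rightarrow> 'a" and col :: "nat \<Rightarrow> nat \<Rightarrow> 'a" and s :: nat
  assumes dr: "upward_layered_drawing V E x y c"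
    and s1: "s \<ge> 1"
    and uV: "u \<in> V"
    and vcol: "\<forall>i<3. col i s = v i"
    and Ef: "\<forall>i<3. (u, v i) \<in> E"
    and Ec: "\<forall>i<3. \<forall>j. j < 2 * s \<longrightarrow> (col i j, col i (Suc j)) \<in> E"
    and du: "\<forall>i<3. \<forall>j. j \<le> 2 * s \<longrightarrow> col i j \<noteq> u"
    and dc: "\<forall>i<3. \<forall>i'<3. \<forall>j j'. j \<le> 2 * s \<longrightarrow> j' \<le> 2 * s \<longrightarrow> i \<noteq> i' \<longrightarrow> col i j \<noteq> col i' j'"
    and sp: "\<forall>(a, b) \<in> E. y b - y a \<le> int s"
  shows False
proof -
  note F1 = drawing_facts(1)[OF dr] and F2 = drawing_facts(2)[OF dr] and F3 = drawing_facts(3)[OF dr]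
  define Q where "Q = vpos x y"
  define K where "K = 2 * s - 1"
  have K: "Suc K = 2 * s" "s \<le> K" using s1 unfolding K_def by auto
  define G where "G i = chainc c (col i) K" for i
  define Ecv where "Ecv i = c (u, v i)" for i
  define P where "P i = Q (v i)" for i
  have ecol: "(col i a, col i (Suc a)) \<in> E" if "i < 3" "a \<le> K" for i a
  proof -
    have "a < 2 * s" using that K by auto
    then show ?thesis using Ec that(1) by blast
  qed
  have efan: "(u, v i) \<in> E" if "i < 3" for i using Ef that by blast
  have vdist: "v i \<noteq> v j" if "i < 3" "j < 3" "i \<noteq> j" for i j
  proof -
    have "s \<le> 2 * s" by simp
    then have "col i s \<noteq> col j s" using dc that by blast
    then show ?thesis using vcol that by auto
  qed
  have vu: "v i \<noteq> u" if "i < 3" for i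
  proof -
    have "s \<le> 2 * s" by simp
    then have "col i s \<noteq> u" using du that by blast
    then show ?thesis using vcol that by auto
  qed
  have Gp: "mcurve (G i) \<and> G i 0 = Q (col i 0) \<and> G i 1 = Q (col i (2 * s))
         \<and> path_image (G i) = (\<Union>j\<le>K. path_image (c (col i j, col i (Suc j))))" if i: "i < 3" for i
  proof -
    have "\<forall>j \<le> K. mcurve (c (col i j, col i (Suc j))) \<and> c (col i j, col i (Suc j)) 0 = Q (col i j)
                \<and> c (col i j, col i (Suc j)) 1 = Q (col i (Suc j))"
    proof (intro allI impI)
      fix j assume "j \<le> K"
      from F1[OF ecol[OF i this]] show "mcurve (c (col i j, col i (Suc j))) \<and> c (col i j, col i (Suc j)) 0 = Q (col i j)
                \<and> c (col i j, col i (Suc j)) 1 = Q (col i (Suc j))" unfolding Q_def by auto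
    qed
    from chainc_props[OF this] show ?thesis unfolding G_def using K by simp
  qed
  have Ep: "mcurve (Ecv i) \<and> Ecv i 0 = Q u \<and> Ecv i 1 = P i" if "i < 3" for i
    using F1[OF efan[OF that]] unfolding Ecv_def P_def Q_def by auto
  have yQ: "snd (Q w) = real_of_int (y w)" for w unfolding Q_def vpos_def by simp
  have ychain: "y (col i j1) + int (j2 - j1) \<le> y (col i j2)" if "i < 3" "j1 \<le> j2" "j2 \<le> 2 * s" for i j1 j2
    using chain_y[OF dr, of "2 * s" "col i"] Ec that by auto
  have yv: "y u < y (v i) \<and> y (v i) \<le> y u + int s" if "i < 3" for i
  proof -
    have e: "(u, v i) \<in> E" using Ef that by auto
    show ?thesis using edge_y[OF dr e] bspec[OF sp e] by auto
  qed
  show False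
  proof (rule core[of Ecv G "Q u" P])
    show "\<forall>i<3. mcurve (Ecv i)" using Ep by auto
    show "\<forall>i<3. mcurve (G i)" using Gp by auto
    show "\<forall>i<3. Ecv i 0 = Q u" using Ep by auto
    show "\<forall>i<3. Ecv i 1 = P i" using Ep by auto
    show "\<forall>i<3. snd (Q u) < snd (P i)" using yv unfolding P_def yQ by auto
    show "\<forall>i<3. snd (G i 0) \<le> snd (Q u)"
    proof (intro allI impI)
      fix i :: nat assume i: "i < 3"
      have "y (col i 0) + int s \<le> y (v i)" using ychain[OF i, of 0 s] vcol i by auto
      then show "snd (G i 0) \<le> snd (Q u)" using Gp[OF i] yv[OF i] yQ by auto
    qed
    show "\<forall>i<3. \<forall>j<3. snd (P j) \<le> snd (G i 1)"
    proof (intro allI impI)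
      fix i j :: nat assume i: "i < 3" and j: "j < 3"
      have "y (v i) + int (2 * s - s) \<le> y (col i (2 * s))" using ychain[OF i, of s "2 * s"] vcol i by auto
      then show "snd (P j) \<le> snd (G i 1)" using Gp[OF i] yv[OF i] yv[OF j] yQ P_def by auto
    qed
    show "\<forall>i<3. P i \<in> path_image (G i)"
    proof (intro allI impI)
      fix i :: nat assume i: "i < 3"
      have "c (col i s, col i (Suc s)) 0 = Q (col i s)"
        using F1[OF ecol[OF i K(2)]] unfolding Q_def by auto
      then have "Q (col i s) \<in> path_image (c (col i s, col i (Suc s)))"
        unfolding path_image_def by (metis atLeastAtMost_iff image_eqI order_refl zero_le_one)
      then have "P i \<in> path_image (c (col i s, col i (Suc s)))" using vcol i P_def by auto
      then show "P i \<in> path_image (G i)" using Gp[OF i] K(2) by blast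
    qed
    show "\<forall>i<3. \<forall>j<3. i \<noteq> j \<longrightarrow> path_image (Ecv i) \<inter> path_image (Ecv j) \<subseteq> {Q u}"
    proof (intro allI impI)
      fix i j :: nat assume ij: "i < 3" "j < 3" "i \<noteq> j"
      have "path_image (c (u, v i)) \<inter> path_image (c (u, v j)) \<subseteq> Q ` ({u, v i} \<inter> {u, v j})"
        using F3[OF efan[OF ij(1)] efan[OF ij(2)]] vdist[OF ij] unfolding Q_def by auto
      also have "\<dots> = {Q u}" using vdist[OF ij] vu ij by auto
      finally show "path_image (Ecv i) \<inter> path_image (Ecv j) \<subseteq> {Q u}" unfolding Ecv_def .
    qed
    show "\<forall>i<3. \<forall>j<3. i \<noteq> j \<longrightarrow> path_image (G i) \<inter> path_image (Ecv j) = {}"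
    proof (intro allI impI)
      fix i j :: nat assume ij: "i < 3" "j < 3" "i \<noteq> j"
      have "path_image (c (col i a, col i (Suc a))) \<inter> path_image (c (u, v j)) = {}" if a: "a \<le> K" for a
      proof -
        have n1: "col i a \<noteq> u" "col i (Suc a) \<noteq> u" using du ij a K by auto
        have b: "a \<le> 2 * s" "Suc a \<le> 2 * s" "s \<le> 2 * s" using a K by auto
        have "col i a \<noteq> col j s" "col i (Suc a) \<noteq> col j s"
          using dc ij b by blast+
        then have n2: "col i a \<noteq> v j" "col i (Suc a) \<noteq> v j" using vcol ij by auto
        have "path_image (c (col i a, col i (Suc a))) \<inter> path_image (c (u, v j))
              \<subseteq> Q ` ({col i a, col i (Suc a)} \<inter> {u, v j})"
          using F3[OF ecol[OF ij(1) a] efan[OF ij(2)]] n1 unfolding Q_def by auto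
        then show ?thesis using n1 n2 by auto
      qed
      then show "path_image (G i) \<inter> path_image (Ecv j) = {}" using Gp[OF \<open>i<3\<close>] unfolding Ecv_def by auto
    qed
    show "\<forall>i<3. path_image (G i) \<inter> path_image (Ecv i) \<subseteq> {P i}"
    proof (intro allI impI)
      fix i :: nat assume i: "i < 3"
      have "path_image (c (col i a, col i (Suc a))) \<inter> path_image (c (u, v i)) \<subseteq> {P i}" if a: "a \<le> K" for a
      proof -
        have n1: "col i a \<noteq> u" "col i (Suc a) \<noteq> u" using du i a K by auto
        have "path_image (c (col i a, col i (Suc a))) \<inter> path_image (c (u, v i))
              \<subseteq> Q ` ({col i a, col i (Suc a)} \<inter> {u, v i})"
          using F3[OF ecol[OF i a] efan[OF i]] n1 unfolding Q_def by auto
        then show ?thesis using n1 unfolding P_def by auto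
      qed
      then show "path_image (G i) \<inter> path_image (Ecv i) \<subseteq> {P i}" using Gp[OF i] unfolding Ecv_def by auto
    qed
    show "\<forall>i<3. \<forall>j<3. i \<noteq> j \<longrightarrow> path_image (G i) \<inter> path_image (G j) = {}"
    proof (intro allI impI)
      fix i j :: nat assume ij: "i < 3" "j < 3" "i \<noteq> j"
      have "path_image (c (col i a, col i (Suc a))) \<inter> path_image (c (col j b, col j (Suc b))) = {}"
        if a: "a \<le> K" and b: "b \<le> K" for a b
      proof -
        have n: "col i a \<noteq> col j b" "col i a \<noteq> col j (Suc b)" "col i (Suc a) \<noteq> col j b"
           "col i (Suc a) \<noteq> col j (Suc b)"
        proof -
          have bb: "a \<le> 2 * s" "Suc a \<le> 2 * s" "b \<le> 2 * s" "Suc b \<le> 2 * s" using a b K by auto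
          show "col i a \<noteq> col j b" "col i a \<noteq> col j (Suc b)" "col i (Suc a) \<noteq> col j b"
           "col i (Suc a) \<noteq> col j (Suc b)" using dc ij bb by blast+
        qed
        have "path_image (c (col i a, col i (Suc a))) \<inter> path_image (c (col j b, col j (Suc b)))
              \<subseteq> Q ` ({col i a, col i (Suc a)} \<inter> {col j b, col j (Suc b)})"
          using F3[OF ecol[OF ij(1) a] ecol[OF ij(2) b]] n unfolding Q_def by auto
        then show ?thesis using n by auto
      qed
      then show "path_image (G i) \<inter> path_image (G j) = {}" using Gp ij by auto
    qed
    show "\<forall>i<3. Q u \<notin> path_image (G i)"
    proof (intro allI impI)
      fix i :: nat assume i: "i < 3"
      have "Q u \<notin> path_image (c (col i a, col i (Suc a)))" if a: "a \<le> K" for a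
      proof
        assume q: "Q u \<in> path_image (c (col i a, col i (Suc a)))"
        have bb: "a < 2 * s" "a \<le> 2 * s" "Suc a \<le> 2 * s" using a K by auto
        have e: "(col i a, col i (Suc a)) \<in> E" using Ec i bb by blast
        have "u = col i a \<or> u = col i (Suc a)" using F2[OF e uV] q unfolding Q_def by auto
        moreover have "col i a \<noteq> u" "col i (Suc a) \<noteq> u" using du i bb by blast+
        ultimately show False by auto
      qed
      then show "Q u \<notin> path_image (G i)" using Gp[OF i] by auto
    qed
  qed
qed

definition par :: "nat \<Rightarrow> nat \<Rightarrow> nat" where
  "par s w = (if w \<le> 3 then 0 else if w < 10 \<and> w < 6 * s + 4 then (w - 4) div 2 + 1
              else if w < 6 * s + 4 then w - 6 else w - 1)"

definition pe :: "nat \<Rightarrow> nat \<Rightarrow> nat \<times> nat" where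
  "pe s w = (if w \<le> 3 \<or> odd w then (par s w, w) else (w, par s w))"

definition EE :: "nat \<Rightarrow> nat \<Rightarrow> (nat \<times> nat) set" where
  "EE s n = pe s ` {1..<n}"

definition rk :: "nat \<Rightarrow> nat \<Rightarrow> int" where
  "rk s w = (if w = 0 then int s - 1 else if w \<le> 3 then int s
             else if w < 6 * s + 4 then (if odd w then int s + int ((w - 4) div 6 + 1) else int s - int ((w - 4) div 6 + 1))
             else (if even w then 2 * int s - 1 else 2 * int s))"

lemma par_fan: "1 \<le> w \<Longrightarrow> w \<le> 3 \<Longrightarrow> par s w = 0" unfolding par_def by simp
lemma par_col1: "4 \<le> w \<Longrightarrow> w < 10 \<Longrightarrow> w < 6 * s + 4 \<Longrightarrow> par s w = (w - 4) div 2 + 1"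
  unfolding par_def by simp
lemma par_col2: "10 \<le> w \<Longrightarrow> w < 6 * s + 4 \<Longrightarrow> par s w = w - 6"
  unfolding par_def by simp
lemma par_ch: "6 * s + 4 \<le> w \<Longrightarrow> par s w = w - 1"
  unfolding par_def by simp
lemma par_lt: "1 \<le> w \<Longrightarrow> par s w < w"
proof -
  assume w1: "1 \<le> w"
  consider "w \<le> 3" | "4 \<le> w" "w < 10" "w < 6 * s + 4" | "10 \<le> w" "w < 6 * s + 4" | "6 * s + 4 \<le> w"
    by linarith
  then show ?thesis
  proof cases
    case 1 then show ?thesis using w1 by (simp add: par_fan)
  next
    case 2 then show ?thesis by (simp add: par_col1)
  next
    case 3 then show ?thesis by (simp add: par_col2)
  next
    case 4 then show ?thesis by (simp add: par_ch)
  qed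
qed

lemma pe_cases: "pe s w = (par s w, w) \<or> pe s w = (w, par s w)"
  unfolding pe_def by auto

lemma pe_max: "1 \<le> w \<Longrightarrow> max (fst (pe s w)) (snd (pe s w)) = w"
proof -
  assume w: "1 \<le> w"
  have l: "par s w < w" using par_lt[OF w] .
  show ?thesis
  proof (cases "pe s w = (par s w, w)")
    case True then show ?thesis using l by simp
  next
    case False then have "pe s w = (w, par s w)" using pe_cases[of s w] by blast
    then show ?thesis using l by simp
  qed
qed

lemma pe_inj: "inj_on (pe s) {1..<n}"
proof (rule inj_onI)
  fix w w' assume w: "w \<in> {1..<n}" and w': "w' \<in> {1..<n}" and eq: "pe s w = pe s w'"
  have "w = max (fst (pe s w)) (snd (pe s w))" using pe_max w by simp
  also have "\<dots> = max (fst (pe s w')) (snd (pe s w'))" using eq by simp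
  also have "\<dots> = w'" using pe_max w' by simp
  finally show "w = w'" .
qed

lemma card_EE: "card (EE s n) = n - 1"
  unfolding EE_def using card_image[OF pe_inj] by simp

lemma EE_sub: "EE s n \<subseteq> {0..<n} \<times> {0..<n}"
proof
  fix e assume "e \<in> EE s n"
  then obtain w where w: "w \<in> {1..<n}" "e = pe s w" unfolding EE_def by auto
  then show "e \<in> {0..<n} \<times> {0..<n}" using pe_cases[of s w] par_lt[of w s] by auto
qed

lemma rk_0: "rk s 0 = int s - 1" unfolding rk_def by simp
lemma rk_fan: "1 \<le> w \<Longrightarrow> w \<le> 3 \<Longrightarrow> rk s w = int s" unfolding rk_def by simp
lemma rk_col: "4 \<le> w \<Longrightarrow> w < 6 * s + 4 \<Longrightarrow>
   rk s w = (if odd w then int s + int ((w - 4) div 6 + 1) else int s - int ((w - 4) div 6 + 1))"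
  unfolding rk_def by simp
lemma rk_ch: "6 * s + 4 \<le> w \<Longrightarrow> rk s w = (if even w then 2 * int s - 1 else 2 * int s)"
  unfolding rk_def by simp
lemma pe_up: "w \<le> 3 \<or> odd w \<Longrightarrow> pe s w = (par s w, w)" unfolding pe_def by simp
lemma pe_down: "\<not> (w \<le> 3 \<or> odd w) \<Longrightarrow> pe s w = (w, par s w)" unfolding pe_def by simp

lemma rk_par: "1 \<le> w \<Longrightarrow> (w \<le> 3 \<or> odd w \<longrightarrow> rk s (par s w) < rk s w) \<and> (\<not> (w \<le> 3 \<or> odd w) \<longrightarrow> rk s w < rk s (par s w))"
proof -
  assume w1: "1 \<le> w"
  consider "w \<le> 3" | "4 \<le> w" "w < 10" "w < 6 * s + 4" | "10 \<le> w" "w < 6 * s + 4" | "6 * s + 4 \<le> w"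
    by linarith
  then show ?thesis
  proof cases
    case 1 then show ?thesis using w1 by (simp add: par_fan rk_fan rk_0)
  next
    case 2
    have d: "(w - 4) div 6 = 0" using 2 by auto
    have p: "1 \<le> par s w" "par s w \<le> 3" using 2 by (simp_all add: par_col1)
    show ?thesis using 2 d rk_fan[OF p] by (simp add: rk_col)
  next
    case 3
    have p: "par s w = w - 6" using 3 by (simp add: par_col2)
    have d: "(w - 6 - 4) div 6 + 1 = (w - 4) div 6" using 3 by auto
    have o: "odd (w - 6) = odd w" using 3 by auto
    have r: "4 \<le> w - 6" "w - 6 < 6 * s + 4" using 3 by auto
    show ?thesis using 3 p d o rk_col[OF r] rk_col[of w s] by auto
  next
    case 4
    then have p: "par s w = w - 1" by (simp add: par_ch)
    show ?thesis
    proof (cases "w = 6 * s + 4")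
      case True
      show ?thesis
      proof (cases "s = 0")
        case True then show ?thesis using \<open>w = 6 * s + 4\<close> p by (simp add: rk_fan rk_ch)
      next
        case False
        then have "(6 * s + 3 - 4) div 6 + 1 = s" by presburger
        moreover have "4 \<le> 6 * s + 3" "6 * s + 3 < 6 * s + 4" using False by auto
        ultimately have r3: "rk s (6 * s + 3) = 2 * int s" using rk_col[of "6 * s + 3" s] by simp
        have "par s w = 6 * s + 3" using p \<open>w = 6 * s + 4\<close> by simp
        then have "rk s (par s w) = 2 * int s" using r3 by simp
        moreover have "rk s w = 2 * int s - 1" using \<open>w = 6 * s + 4\<close> by (simp add: rk_ch)
        moreover have "\<not> (w \<le> 3 \<or> odd w)" using \<open>w = 6 * s + 4\<close> by simp
        ultimately show ?thesis by simp
      qed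
    next
      case False
      then have f1: "6 * s + 4 \<le> w - 1" and f2: "even (w - 1) = odd w" using 4 by auto
      have r1: "rk s (w - 1) = (if even w then 2 * int s else 2 * int s - 1)"
        using rk_ch[OF f1] f2 by simp
      have r2: "rk s w = (if even w then 2 * int s - 1 else 2 * int s)" using rk_ch[OF 4] .
      show ?thesis using p r1 r2 4 by auto
    qed
  qed
qed

lemma rk_edge:
  assumes "1 \<le> w"
  shows "rk s (fst (pe s w)) < rk s (snd (pe s w))"
  using rk_par[OF assms, of s] pe_up[of w s] pe_down[of w s] by (cases "w \<le> 3 \<or> odd w") auto

lemma rk_bounds:
  assumes "w < n" "6 * s + 4 \<le> n"
  shows "(if s = 0 then -1 else 0) \<le> rk s w \<and> rk s w \<le> 2 * int s"
proof -
  consider "w = 0" | "1 \<le> w" "w \<le> 3" | "4 \<le> w" "w < 6 * s + 4" | "6 * s + 4 \<le> w" by linarith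
  then show ?thesis
  proof cases
    case 1 then show ?thesis by (simp add: rk_0)
  next
    case 2 then show ?thesis by (simp add: rk_fan)
  next
    case 3
    then have "(w - 4) div 6 + 1 \<le> s" by auto
    then show ?thesis using 3 rk_col[OF 3] by auto
  next
    case 4 then show ?thesis using rk_ch[OF 4] by auto
  qed
qed

lemma EE_rk: "(a, b) \<in> EE s n \<Longrightarrow> rk s a < rk s b"
proof -
  assume "(a, b) \<in> EE s n"
  then obtain w where "w \<in> {1..<n}" "(a, b) = pe s w" unfolding EE_def by auto
  then show ?thesis using rk_edge[of w s] by (metis atLeastLessThan_iff fst_conv snd_conv)
qed

lemma relpow_rk:
  assumes "(a, b) \<in> EE s n ^^ k"
  shows "k = 0 \<or> (rk s a + int k \<le> rk s b \<and> a < n \<and> b < n)"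
  using assms
proof (induction k arbitrary: b)
  case 0 then show ?case by simp
next
  case (Suc k)
  then obtain z where z: "(a, z) \<in> EE s n ^^ k" "(z, b) \<in> EE s n" by auto
  have zb: "rk s z < rk s b" "z < n" "b < n" using EE_rk[OF z(2)] EE_sub[of s n] z(2) by auto
  show ?case
  proof (cases "k = 0")
    case True then show ?thesis using z zb by auto
  next
    case False then show ?thesis using Suc.IH[OF z(1)] zb by auto
  qed
qed

lemma path_bound:
  assumes "(a, b) \<in> EE s n ^^ k" "6 * s + 4 \<le> n" "2 * s \<le> l" "1 \<le> l"
  shows "k \<le> l"
proof -
  from relpow_rk[OF assms(1)] consider "k = 0" | "rk s a + int k \<le> rk s b" "a < n" "b < n" by auto
  then show ?thesis
  proof cases
    case 1 then show ?thesis by simp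
  next
    case 2
    have "rk s b - rk s a \<le> int l"
      using rk_bounds[OF 2(2) assms(2)] rk_bounds[OF 2(3) assms(2)] assms(3,4)
      by (cases "s = 0") auto
    then show ?thesis using 2 by auto
  qed
qed

lemma acyc: "acyclic (EE s n)"
proof -
  have "(a, b) \<in> (EE s n)\<^sup>+ \<Longrightarrow> rk s a < rk s b" for a b
    by (induction rule: trancl_induct) (auto dest: EE_rk)
  then show ?thesis unfolding acyclic_def by auto
qed

lemma conn0:
  assumes "w < n"
  shows "(0, w) \<in> (EE s n \<union> (EE s n)\<inverse>)\<^sup>*"
  using assms
proof (induction w rule: less_induct)
  case (less w)
  show ?case
  proof (cases "w = 0")
    case True then show ?thesis by simp
  next
    case False
    then have w1: "w \<in> {1..<n}" using less by auto
    have "pe s w \<in> EE s n" using w1 unfolding EE_def by auto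
    then have "(par s w, w) \<in> EE s n \<union> (EE s n)\<inverse>"
      using pe_cases[of s w] by auto
    moreover have "(0, par s w) \<in> (EE s n \<union> (EE s n)\<inverse>)\<^sup>*"
      using less.IH[of "par s w"] par_lt[of w s] w1 less.prems by auto
    ultimately show ?thesis by (meson rtrancl.rtrancl_into_rtrancl)
  qed
qed

lemma conn:
  assumes "u < n" "v < n"
  shows "(u, v) \<in> (EE s n \<union> (EE s n)\<inverse>)\<^sup>*"
proof -
  have s: "sym (EE s n \<union> (EE s n)\<inverse>)" unfolding sym_def by auto
  have "(u, 0) \<in> (EE s n \<union> (EE s n)\<inverse>)\<^sup>*"
    using conn0[OF assms(1)] sym_rtrancl[OF s] unfolding sym_def by blast
  then show ?thesis using conn0[OF assms(2)] by (meson rtrancl_trans)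
qed

lemma dtree:
  assumes "4 \<le> n"
  shows "directed_tree {0..<n} (EE s n)"
  unfolding directed_tree_def
proof (intro conjI)
  show "finite {0..<n}" by simp
  show "{0..<n} \<noteq> {}" using assms by auto
  show "EE s n \<subseteq> {0..<n} \<times> {0..<n}" by (rule EE_sub)
  show "acyclic (EE s n)" by (rule acyc)
  show "\<forall>u v. (u, v) \<in> EE s n \<longrightarrow> (v, u) \<notin> EE s n"
  proof (intro allI impI notI)
    fix u v assume "(u, v) \<in> EE s n" "(v, u) \<in> EE s n"
    then show False using EE_rk[of u v s n] EE_rk[of v u s n] by simp
  qed
  show "\<forall>u\<in>{0..<n}. \<forall>v\<in>{0..<n}. (u, v) \<in> (EE s n \<union> (EE s n)\<inverse>)\<^sup>*" using conn by auto
  show "card (EE s n) + 1 = card {0..<n}" using card_EE[of s n] assms by simp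
qed

definition ci :: "nat \<Rightarrow> nat" where "ci w = ((w - 4) mod 6) div 2"
definition cd :: "nat \<Rightarrow> nat" where "cd w = (w - 4) div 6 + 1"

definition XX :: "nat \<Rightarrow> nat \<Rightarrow> real" where
  "XX s w = (if w = 0 then 0 else if w \<le> 3 then real w else if w < 6 * s + 4 then real (ci w + 1)
             else real w - real (6 * s + 4) + 4)"

definition YY :: "nat \<Rightarrow> nat \<Rightarrow> int" where
  "YY s w = (if w = 0 then 0 else if w \<le> 3 then 3 * int s + 3 else if w < 6 * s + 4 then
              (if odd w then 3 * int s + 3 + int (cd w) else 3 * int s + 3 - int (cd w))
             else 4 * int s + 3 - (if even w then 1 else 0))"

lemma XY0: "XX s 0 = 0" "YY s 0 = 0" unfolding XX_def YY_def by simp_all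

lemma XYF: "1 \<le> w \<Longrightarrow> w \<le> 3 \<Longrightarrow> XX s w = real w \<and> YY s w = 3 * int s + 3"
  unfolding XX_def YY_def by simp

lemma XYC: "4 \<le> w \<Longrightarrow> w < 6 * s + 4 \<Longrightarrow> XX s w = real (ci w + 1) \<and>
   YY s w = (if odd w then 3 * int s + 3 + int (cd w) else 3 * int s + 3 - int (cd w))"
  unfolding XX_def YY_def by simp

lemma XYZ: "6 * s + 4 \<le> w \<Longrightarrow> XX s w = real w - real (6 * s + 4) + 4 \<and>
   YY s w = 4 * int s + 3 - (if even w then 1 else 0)"
  unfolding XX_def YY_def by simp

lemma col_params:
  assumes "4 \<le> w" "w < 6 * s + 4"
  shows "ci w \<le> 2 \<and> 1 \<le> cd w \<and> cd w \<le> s"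
proof -
  have "(w - 4) mod 6 < 6" by simp
  then have "ci w \<le> 2" unfolding ci_def by linarith
  moreover have "w - 4 < s * 6" using assms by simp
  then have "(w - 4) div 6 < s" by (rule less_mult_imp_div_less)
  ultimately show ?thesis unfolding cd_def using assms by simp
qed

lemma col_par:
  assumes "4 \<le> w" "w < 6 * s + 4"
  shows "XX s (par s w) = real (ci w + 1) \<and>
         YY s (par s w) = (if odd w then 3 * int s + 3 + int (cd w) - 1 else 3 * int s + 3 - int (cd w) + 1)"
proof (cases "w < 10")
  case True
  have p: "par s w = (w - 4) div 2 + 1" using True assms by (simp add: par_col1)
  have c: "ci w = (w - 4) div 2" "cd w = 1" using True assms unfolding ci_def cd_def by auto
  have "1 \<le> par s w" "par s w \<le> 3" using p True assms by auto
  then show ?thesis using XYF[of "par s w" s] p c by simp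
next
  case False
  have p: "par s w = w - 6" using False assms by (simp add: par_col2)
  have r: "4 \<le> w - 6" "w - 6 < 6 * s + 4" using False assms by auto
  have e: "w - 4 = (w - 6 - 4) + 6" using False by simp
  have c: "ci (w - 6) = ci w" "cd (w - 6) = cd w - 1" "cd w \<ge> 2" unfolding ci_def cd_def
    by (subst e, simp)+
  have o: "odd (w - 6) = odd w" using False by auto
  show ?thesis using XYC[OF r] p c o by auto
qed

lemma ch_par:
  assumes "6 * s + 4 \<le> w"
  shows "XX s (par s w) = real w - real (6 * s + 4) + 3 \<and>
         YY s (par s w) = 4 * int s + 3 - (if odd w then 1 else 0)"
proof (cases "w = 6 * s + 4")
  case True
  have p: "par s w = 6 * s + 3" using True by (simp add: par_ch)
  show ?thesis
  proof (cases "s = 0")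
    case True
    then show ?thesis using p \<open>w = 6 * s + 4\<close> XYF[of 3 s] by simp
  next
    case False
    have r: "4 \<le> 6 * s + 3" "6 * s + 3 < 6 * s + 4" using False by auto
    have e: "6 * s + 3 - 4 = 5 + 6 * (s - 1)" using False by simp
    have c: "ci (6 * s + 3) = 2" "cd (6 * s + 3) = s" unfolding ci_def cd_def e using False by simp_all
    show ?thesis using XYC[OF r] p c \<open>w = 6 * s + 4\<close> by simp
  qed
next
  case False
  have p: "par s w = w - 1" using assms by (simp add: par_ch)
  have r: "6 * s + 4 \<le> w - 1" using False assms by auto
  have e: "even (w - 1) = odd w" using assms by auto
  show ?thesis using XYZ[OF r] p e assms by (auto simp: of_nat_diff)
qed

definition sp :: "nat \<Rightarrow> nat \<Rightarrow> real \<Rightarrow> real \<times> real" where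
  "sp s w t = (XX s (par s w) + t * (XX s w - XX s (par s w)),
               real_of_int (YY s (par s w)) + t * (real_of_int (YY s w) - real_of_int (YY s (par s w))))"

definition lo :: "nat \<Rightarrow> nat \<Rightarrow> int" where
  "lo s w = (if odd w then 3 * int s + 3 + int (cd w) - 1 else 3 * int s + 3 - int (cd w))"

lemma lo_real: "real_of_int (lo s w) = (if odd w then 3 * real s + 2 + real (cd w) else 3 * real s + 3 - real (cd w))"
  unfolding lo_def by simp

lemma spF: "1 \<le> w \<Longrightarrow> w \<le> 3 \<Longrightarrow> sp s w t = (t * real w, t * (3 * real s + 3))"
  unfolding sp_def using XYF[of w s] par_fan[of w s] XY0 by simp

lemma spC: "4 \<le> w \<Longrightarrow> w < 6 * s + 4 \<Longrightarrow>
   sp s w t = (real (ci w + 1), real_of_int (lo s w) + (if odd w then t else 1 - t))"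
  unfolding sp_def lo_def using XYC[of w s] col_par[of w s] by (auto simp: algebra_simps)

lemma spZ: "6 * s + 4 \<le> w \<Longrightarrow>
   sp s w t = (real w - real (6 * s + 4) + 3 + t, 4 * real s + 3 - (if odd w then 1 - t else t))"
proof -
  assume a: "6 * s + 4 \<le> w"
  have x1: "XX s w = real w - real (6 * s + 4) + 4" and y1: "YY s w = 4 * int s + 3 - (if even w then 1 else 0)"
    using XYZ[OF a] by auto
  have x2: "XX s (par s w) = real w - real (6 * s + 4) + 3" and y2: "YY s (par s w) = 4 * int s + 3 - (if odd w then 1 else 0)"
    using ch_par[OF a] by auto
  show ?thesis unfolding sp_def x1 y1 x2 y2 by (auto simp: algebra_simps)
qed

lemma col_det:
  assumes "4 \<le> w" "4 \<le> w'" "ci w = ci w'" "cd w = cd w'" "odd w = odd w'"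
  shows "w = w'"
proof -
  define q where "q = w - 4"
  define q' where "q' = w' - 4"
  have wq: "w = q + 4" "w' = q' + 4" using assms(1,2) unfolding q_def q'_def by auto
  have "odd q = odd q'" using assms(5) wq by simp
  then have m2: "q mod 2 = q' mod 2" by (metis odd_iff_mod_2_eq_one even_iff_mod_2_eq_zero)
  have mm: "(q mod 6) mod 2 = q mod 2" "(q' mod 6) mod 2 = q' mod 2" by (rule mod_mod_cancel, simp)+
  have a: "q mod 6 = 2 * ((q mod 6) div 2) + (q mod 6) mod 2" by (metis mult_div_mod_eq)
  have b: "q' mod 6 = 2 * ((q' mod 6) div 2) + (q' mod 6) mod 2" by (metis mult_div_mod_eq)
  have "(q mod 6) div 2 = (q' mod 6) div 2" using assms(3) unfolding ci_def q_def q'_def .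
  then have "q mod 6 = q' mod 6" using a b m2 mm by simp
  moreover have "q div 6 = q' div 6" using assms(4) unfolding cd_def q_def q'_def by simp
  ultimately have "q = q'" by (metis mult_div_mod_eq)
  then show ?thesis using wq by simp
qed

lemma FC_one:
  assumes w: "1 \<le> w" "w \<le> 3" and w': "4 \<le> w'" "w' < 6 * s + 4"
    and t: "0 \<le> t" "t \<le> 1" "0 \<le> t'" "t' \<le> 1" and eq: "sp s w t = sp s w' t'"
  shows "t = 1"
proof (rule ccontr)
  assume nt: "t \<noteq> 1"
  then have t1: "t < 1" using t by auto
  define c where "c = real (ci w' + 1)"
  define Hr where "Hr = 3 * real s + 3"
  have e1: "t * real w = c" and e2: "t * Hr = real_of_int (lo s w') + (if odd w' then t' else 1 - t')"
    using eq spF[OF w, of s t] spC[OF w', of t'] unfolding c_def Hr_def by auto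
  have cp: "1 \<le> cd w'" "cd w' \<le> s" using col_params[OF w'] by auto
  have "real_of_int (lo s w') \<ge> 2 * real s + 3" using cp unfolding lo_def by auto
  then have tH: "t * Hr \<ge> Hr - real s" using e2 t unfolding Hr_def by (auto split: if_splits)
  have "t * real w < real w" using t1 w by simp
  then have "ci w' + 1 < w" using e1 unfolding c_def by linarith
  then have cw: "c \<le> real w - 1" unfolding c_def by linarith
  have Hp: "0 \<le> Hr" unfolding Hr_def by simp
  have "real w * (Hr - real s) \<le> real w * (t * Hr)" using tH by (rule mult_left_mono) simp
  also have "\<dots> = c * Hr" using e1 by (simp add: algebra_simps)
  also have "\<dots> \<le> (real w - 1) * Hr" using cw Hp by (rule mult_right_mono)
  finally have "real w * Hr - real w * real s \<le> real w * Hr - Hr" by (simp add: algebra_simps)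
  then have "Hr \<le> real w * real s" by simp
  also have "\<dots> \<le> 3 * real s" using w by (intro mult_right_mono) auto
  finally show False unfolding Hr_def by simp
qed

lemma x_le3:
  assumes "1 \<le> w" "w < 6 * s + 4" "0 \<le> t" "t \<le> 1"
  shows "fst (sp s w t) \<le> 3"
proof (cases "w \<le> 3")
  case True
  have "t * real w \<le> real w" using assms by (simp add: mult_left_le_one_le)
  then show ?thesis using spF[OF assms(1) True, of s t] True by simp
next
  case False
  then show ?thesis using spC[of w s t] col_params[of w s] assms by simp
qed

lemma Z_other:
  assumes "6 * s + 4 \<le> w" "1 \<le> w'" "w' < 6 * s + 4" "0 \<le> t" "t \<le> 1" "0 \<le> t'" "t' \<le> 1"
    and eq: "sp s w t = sp s w' t'"
  shows "w = 6 * s + 4 \<and> t = 0"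
proof -
  have "fst (sp s w t) \<le> 3" using eq x_le3[OF assms(2,3,6,7)] by simp
  then have "real w - real (6 * s + 4) + t \<le> 0" using spZ[OF assms(1), of t] by simp
  moreover have "real (6 * s + 4) \<le> real w" using assms(1) by linarith
  ultimately show ?thesis using assms(4) by linarith
qed

lemma endpt:
  assumes w: "1 \<le> w" and w': "1 \<le> w'" and ne: "w \<noteq> w'"
    and t: "0 \<le> t" "t \<le> 1" "0 \<le> t'" "t' \<le> 1" and eq: "sp s w t = sp s w' t'"
  shows "t = 0 \<or> t = 1"
proof -
  consider "w \<le> 3" | "4 \<le> w" "w < 6 * s + 4" | "6 * s + 4 \<le> w" by linarith
  then show ?thesis
  proof cases
    case 3
    show ?thesis
    proof (cases "6 * s + 4 \<le> w'")
      case True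
      have "real w + t = real w' + t'" using eq spZ[OF 3, of t] spZ[OF True, of t'] by simp
      moreover have "real w + 1 \<le> real w' \<or> real w' + 1 \<le> real w" using ne by linarith
      ultimately show ?thesis using t by linarith
    next
      case False
      then show ?thesis using Z_other[OF 3 w' _ t eq] by simp
    qed
  next
    case 1
    consider "w' \<le> 3" | "4 \<le> w'" "w' < 6 * s + 4" | "6 * s + 4 \<le> w'" by linarith
    then show ?thesis
    proof cases
      case 1
      have a: "t * real w = t' * real w'" and b: "t * (3 * real s + 3) = t' * (3 * real s + 3)"
        using eq spF[OF w \<open>w \<le> 3\<close>, of s t] spF[OF w' 1, of s t'] by auto
      have "3 * real s + 3 \<noteq> 0" by simp
      then have "t = t'" using b by simp
      then have "t * (real w - real w') = 0" using a by (simp add: algebra_simps)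
      then show ?thesis using ne by simp
    next
      case 2
      then show ?thesis using FC_one[OF w \<open>w \<le> 3\<close> 2 t eq] by simp
    next
      case 3
      have "w' = 6 * s + 4 \<and> t' = 0" using Z_other[OF 3 w _ t(3,4,1,2) eq[symmetric]] \<open>w \<le> 3\<close> by simp
      then have "t * real w = 3" using eq spF[OF w \<open>w \<le> 3\<close>, of s t] spZ[OF 3, of t'] by simp
      moreover have "t * real w \<le> real w" using t w by (simp add: mult_left_le_one_le)
      ultimately have "w = 3" using \<open>w \<le> 3\<close> by linarith
      then show ?thesis using \<open>t * real w = 3\<close> by simp
    qed
  next
    case 2
    have cp: "1 \<le> cd w" "cd w \<le> s" "ci w \<le> 2" using col_params[OF 2] by auto
    have s1: "1 \<le> s" using 2 by auto
    consider "w' \<le> 3" | "4 \<le> w'" "w' < 6 * s + 4" | "6 * s + 4 \<le> w'" by linarith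
    then show ?thesis
    proof cases
      case 1
      have "t' = 1" using FC_one[OF w' 1 2 t(3,4,1,2) eq[symmetric]] .
      then have "real_of_int (lo s w) + (if odd w then t else 1 - t) = 3 * real s + 3"
        using eq spF[OF w' 1, of s t'] spC[OF 2, of t] by simp
      then show ?thesis using cp t unfolding lo_real by (cases "odd w") simp_all
    next
      case 4: 2
      have ci: "ci w = ci w'" using eq spC[OF 2, of t] spC[OF 4, of t'] by simp
      have y: "real_of_int (lo s w) + (if odd w then t else 1 - t) = real_of_int (lo s w') + (if odd w' then t' else 1 - t')"
        using eq spC[OF 2, of t] spC[OF 4, of t'] by simp
      have cp': "1 \<le> cd w'" "cd w' \<le> s" using col_params[OF 4] by auto
      have "lo s w \<noteq> lo s w'"
      proof
        assume l: "lo s w = lo s w'"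
        have l': "real_of_int (lo s w) = real_of_int (lo s w')" using l by simp
        have "odd w = odd w'" using l' cp cp' unfolding lo_real by (cases "odd w"; cases "odd w'") simp_all
        moreover then have "real (cd w) = real (cd w')" using l' unfolding lo_real by (cases "odd w") simp_all
        then have "cd w = cd w'" by simp
        ultimately have "w = w'" using col_det[of w w'] 2 4 ci by simp
        then show False using ne by simp
      qed
      then have "lo s w + 1 \<le> lo s w' \<or> lo s w' + 1 \<le> lo s w" by linarith
      then have "real_of_int (lo s w) + 1 \<le> real_of_int (lo s w') \<or> real_of_int (lo s w') + 1 \<le> real_of_int (lo s w)"
        by linarith
      then show ?thesis using y t by (cases "odd w"; cases "odd w'"; simp; smt (verit))
    next
      case 3
      have "w' = 6 * s + 4 \<and> t' = 0" using Z_other[OF 3 w _ t(3,4,1,2) eq[symmetric]] 2 by simp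
      then have "real_of_int (lo s w) + (if odd w then t else 1 - t) = 4 * real s + 3"
        using eq spC[OF 2, of t] spZ[OF 3, of t'] by simp
      then show ?thesis using cp t s1 unfolding lo_real by (cases "odd w") simp_all
    qed
  qed
qed

lemma par_child:
  assumes "1 \<le> w" "par s w = v"
  shows "(v = 0 \<and> w \<le> 3) \<or> (1 \<le> v \<and> v \<le> 3 \<and> 1 \<le> s \<and> (w = 2 * v + 2 \<or> w = 2 * v + 3))
       \<or> (v = 3 \<and> s = 0 \<and> w = 4) \<or> (4 \<le> v \<and> (w = v + 1 \<or> w = v + 6))"
proof -
  consider "w \<le> 3" | "4 \<le> w" "w < 10" "w < 6 * s + 4" | "10 \<le> w" "w < 6 * s + 4" | "6 * s + 4 \<le> w"
    by linarith
  then show ?thesis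
  proof cases
    case 1 then show ?thesis using assms par_fan[of w s] by simp
  next
    case 2
    then have "v = (w - 4) div 2 + 1" using assms par_col1 by simp
    moreover have "1 \<le> s" using 2 by auto
    ultimately show ?thesis using 2 by presburger
  next
    case 3
    then have "v = w - 6" using assms par_col2[of w s] by simp
    then have "4 \<le> v \<and> w = v + 6" using 3 by simp
    then show ?thesis by blast
  next
    case 4
    then have v: "v = w - 1" using assms par_ch by simp
    show ?thesis
    proof (cases "4 \<le> v")
      case True then show ?thesis using v 4 by simp
    next
      case False
      then have "s = 0" "w = 4" using v 4 by auto
      then have "v = 3 \<and> s = 0 \<and> w = 4" using v by simp
      then show ?thesis by blast
    qed
  qed
qed

lemma card3: "card {a, b, c :: nat} \<le> 3"
  by (simp add: card_insert_if)

lemma card2: "card {a, b :: nat} \<le> 3"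
  by (simp add: card_insert_if)

lemma degree_le:
  shows "degree (EE s n) v \<le> 3"
proof -
  define S where "S = {w \<in> {1..<n}. w = v \<or> par s w = v}"
  have sub: "{e \<in> EE s n. fst e = v \<or> snd e = v} \<subseteq> pe s ` S"
  proof
    fix e assume e: "e \<in> {e \<in> EE s n. fst e = v \<or> snd e = v}"
    then obtain w where w: "w \<in> {1..<n}" "e = pe s w" unfolding EE_def by auto
    have "w = v \<or> par s w = v" using e w pe_cases[of s w] by auto
    then show "e \<in> pe s ` S" using w unfolding S_def by auto
  qed
  have fS: "finite S" unfolding S_def by simp
  have "degree (EE s n) v \<le> card (pe s ` S)"
    unfolding degree_def by (rule card_mono[OF finite_imageI[OF fS] sub])
  also have "\<dots> \<le> card S" by (rule card_image_le[OF fS])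
  also have "card S \<le> 3"
  proof -
    consider "v = 0" | "1 \<le> v" "v \<le> 3" "1 \<le> s" | "1 \<le> v" "v \<le> 3" "s = 0" | "4 \<le> v" by linarith
    then show ?thesis
    proof cases
      case 1
      have "S \<subseteq> {1, 2, 3}"
      proof
        fix w assume "w \<in> S"
        then have "1 \<le> w \<and> (w = v \<or> par s w = v)" unfolding S_def by auto
        then show "w \<in> {1, 2, 3}" using par_child[of w s v] 1 by auto
      qed
      then show ?thesis using card_mono[of "{1,2,3::nat}" S] card3[of 1 2 3] by simp
    next
      case 2
      have "S \<subseteq> {v, 2 * v + 2, 2 * v + 3}"
      proof
        fix w assume "w \<in> S"
        then have "1 \<le> w \<and> (w = v \<or> par s w = v)" unfolding S_def by auto
        then show "w \<in> {v, 2 * v + 2, 2 * v + 3}" using par_child[of w s v] 2 by auto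
      qed
      then show ?thesis using card_mono[of "{v, 2 * v + 2, 2 * v + 3}" S] card3[of v "2 * v + 2" "2 * v + 3"] by simp
    next
      case 3
      have "S \<subseteq> {v, 4}"
      proof
        fix w assume "w \<in> S"
        then have "1 \<le> w \<and> (w = v \<or> par s w = v)" unfolding S_def by auto
        then show "w \<in> {v, 4}" using par_child[of w s v] 3 by auto
      qed
      then show ?thesis using card_mono[of "{v, 4}" S] card2[of v 4] by simp
    next
      case 4
      have "S \<subseteq> {v, v + 1, v + 6}"
      proof
        fix w assume "w \<in> S"
        then have "1 \<le> w \<and> (w = v \<or> par s w = v)" unfolding S_def by auto
        then show "w \<in> {v, v + 1, v + 6}" using par_child[of w s v] 4 by auto
      qed
      then show ?thesis using card_mono[of "{v, v + 1, v + 6}" S] card3[of v "v + 1" "v + 6"] by simp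
    qed
  qed
  finally show ?thesis .
qed

definition seg :: "real \<times> real \<Rightarrow> real \<times> real \<Rightarrow> real \<Rightarrow> real \<times> real" where
  "seg A B t = (fst A + t * (fst B - fst A), snd A + t * (snd B - snd A))"

definition cc :: "nat \<Rightarrow> nat \<times> nat \<Rightarrow> real \<Rightarrow> real \<times> real" where
  "cc s e = seg (vpos (XX s) (YY s) (fst e)) (vpos (XX s) (YY s) (snd e))"

lemma sp_seg: "sp s w = seg (vpos (XX s) (YY s) (par s w)) (vpos (XX s) (YY s) w)"
  unfolding sp_def seg_def vpos_def by (rule ext) simp

lemma sp0: "sp s w 0 = vpos (XX s) (YY s) (par s w)" unfolding sp_def vpos_def by simp
lemma sp1: "sp s w 1 = vpos (XX s) (YY s) w" unfolding sp_def vpos_def by simp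

lemma seg_path: "path (seg A B)"
  unfolding path_def seg_def by (intro continuous_intros)

lemma seg_rev: "seg A B t = seg B A (1 - t)"
  unfolding seg_def by (simp add: algebra_simps)

lemma cc_image: "path_image (cc s (pe s w)) = sp s w ` {0..1}"
proof (cases "pe s w = (par s w, w)")
  case True
  then show ?thesis unfolding cc_def path_image_def sp_seg by simp
next
  case False
  then have p: "pe s w = (w, par s w)" using pe_cases[of s w] by blast
  have "cc s (pe s w) = (\<lambda>t. sp s w (1 - t))" unfolding p cc_def sp_seg
    by (rule ext) (simp add: seg_rev[of "vpos (XX s) (YY s) w"])
  moreover have "(\<lambda>t. 1 - t) ` {0..1::real} = {0..1}"
  proof
    show "(\<lambda>t. 1 - t) ` {0..1::real} \<subseteq> {0..1}" by auto
    show "{0..1::real} \<subseteq> (\<lambda>t. 1 - t) ` {0..1}"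
    proof
      fix x :: real assume "x \<in> {0..1}"
      then show "x \<in> (\<lambda>t. 1 - t) ` {0..1}" by (intro image_eqI[of _ _ "1 - x"]) auto
    qed
  qed
  ultimately show ?thesis unfolding path_image_def by (metis image_image)
qed

lemma y_dir:
  assumes "1 \<le> w"
  shows "(w \<le> 3 \<or> odd w \<longrightarrow> YY s (par s w) < YY s w) \<and> (\<not> (w \<le> 3 \<or> odd w) \<longrightarrow> YY s w < YY s (par s w))"
proof -
  have a: "real_of_int (YY s (par s w)) = snd (sp s w 0)" "real_of_int (YY s w) = snd (sp s w 1)"
    unfolding sp0 sp1 vpos_def by simp_all
  consider "w \<le> 3" | "4 \<le> w" "w < 6 * s + 4" | "6 * s + 4 \<le> w" by linarith
  then have "(w \<le> 3 \<or> odd w \<longrightarrow> snd (sp s w 0) < snd (sp s w 1)) \<and> (\<not> (w \<le> 3 \<or> odd w) \<longrightarrow> snd (sp s w 1) < snd (sp s w 0))"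
  proof cases
    case 1 then show ?thesis using spF[OF assms 1, of s] by simp
  next
    case 2 then show ?thesis using spC[OF 2, of 0] spC[OF 2, of 1] by simp
  next
    case 3 then show ?thesis using spZ[OF 3, of 0] spZ[OF 3, of 1] by simp
  qed
  then show ?thesis unfolding a[symmetric] by simp
qed

lemma cc_props:
  assumes "1 \<le> w"
  shows "path (cc s (pe s w)) \<and> pathstart (cc s (pe s w)) = vpos (XX s) (YY s) (fst (pe s w)) \<and>
         pathfinish (cc s (pe s w)) = vpos (XX s) (YY s) (snd (pe s w)) \<and>
         (\<forall>a b. 0 \<le> a \<and> a < b \<and> b \<le> 1 \<longrightarrow> snd (cc s (pe s w) a) < snd (cc s (pe s w) b))"
proof -
  have lt: "YY s (fst (pe s w)) < YY s (snd (pe s w))"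
    using y_dir[OF assms, of s] unfolding pe_def by auto
  show ?thesis
  proof (intro conjI allI impI)
    show "path (cc s (pe s w))" unfolding cc_def by (rule seg_path)
    show "pathstart (cc s (pe s w)) = vpos (XX s) (YY s) (fst (pe s w))"
      unfolding pathstart_def cc_def seg_def by simp
    show "pathfinish (cc s (pe s w)) = vpos (XX s) (YY s) (snd (pe s w))"
      unfolding pathfinish_def cc_def seg_def by simp
    fix a b :: real assume ab: "0 \<le> a \<and> a < b \<and> b \<le> 1"
    have d: "0 < real_of_int (YY s (snd (pe s w))) - real_of_int (YY s (fst (pe s w)))" using lt by simp
    have "a * (real_of_int (YY s (snd (pe s w))) - real_of_int (YY s (fst (pe s w))))
        < b * (real_of_int (YY s (snd (pe s w))) - real_of_int (YY s (fst (pe s w))))"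
      using ab d by (intro mult_strict_right_mono) auto
    then show "snd (cc s (pe s w) a) < snd (cc s (pe s w) b)"
      unfolding cc_def seg_def vpos_def by simp
  qed
qed

lemma XX_cases:
  "(z = 0 \<and> XX s z = 0) \<or> (1 \<le> z \<and> z < 6 * s + 4 \<and> 1 \<le> XX s z \<and> XX s z \<le> 3) \<or>
   (6 * s + 4 \<le> z \<and> XX s z = real z - real (6 * s + 4) + 4)"
proof -
  consider "z = 0" | "1 \<le> z" "z \<le> 3" | "4 \<le> z" "z < 6 * s + 4" | "6 * s + 4 \<le> z" by linarith
  then show ?thesis
  proof cases
    case 1 then show ?thesis using XY0 by simp
  next
    case 2 then show ?thesis using XYF[OF 2, of s] by simp
  next
    case 3 then show ?thesis using XYC[OF 3] col_params[OF 3] by simp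
  next
    case 4 then show ?thesis using XYZ[OF 4] by simp
  qed
qed

lemma pos_inj: "inj (vpos (XX s) (YY s))"
proof (rule injI)
  fix z z' assume "vpos (XX s) (YY s) z = vpos (XX s) (YY s) z'"
  then have x: "XX s z = XX s z'" and y: "YY s z = YY s z'" unfolding vpos_def by auto
  show "z = z'"
  proof (cases "z = 0 \<or> z' = 0")
    case True then show ?thesis using XX_cases[of z s] XX_cases[of z' s] x by auto
  next
    case False
    show ?thesis
    proof (cases "6 * s + 4 \<le> z \<or> 6 * s + 4 \<le> z'")
      case True
      then have "6 * s + 4 \<le> z \<and> 6 * s + 4 \<le> z'" using XX_cases[of z s] XX_cases[of z' s] x False by auto
      then show ?thesis using XX_cases[of z s] XX_cases[of z' s] x by auto
    next
      case F2: False
      have r: "1 \<le> z" "z < 6 * s + 4" "1 \<le> z'" "z' < 6 * s + 4" using False F2 by auto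
      show ?thesis
      proof (cases "z \<le> 3")
        case True
        have yz: "YY s z = 3 * int s + 3" using XYF[OF r(1) True] by simp
        have "z' \<le> 3"
        proof (rule ccontr)
          assume "\<not> z' \<le> 3"
          then have z4': "4 \<le> z'" by simp
          show False using XYC[OF z4' r(4)] col_params[OF z4' r(4)] y yz by (auto split: if_splits)
        qed
        then show ?thesis using XYF[OF r(1) True] XYF[OF r(3)] x by simp
      next
        case F3: False
        have z4: "4 \<le> z" using F3 by simp
        have "\<not> z' \<le> 3"
        proof
          assume "z' \<le> 3"
          then show False using XYC[OF z4 r(2)] col_params[OF z4 r(2)] XYF[OF r(3) \<open>z' \<le> 3\<close>] y by (auto split: if_splits)
        qed
        then have z4': "4 \<le> z'" by simp
        have cz: "1 \<le> cd z" "1 \<le> cd z'" using col_params[OF z4 r(2)] col_params[OF z4' r(4)] by auto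
        have ci: "ci z = ci z'" using XYC[OF z4 r(2)] XYC[OF z4' r(4)] x by simp
        have yy: "(if odd z then 3 * int s + 3 + int (cd z) else 3 * int s + 3 - int (cd z)) =
                  (if odd z' then 3 * int s + 3 + int (cd z') else 3 * int s + 3 - int (cd z'))"
          using XYC[OF z4 r(2)] XYC[OF z4' r(4)] y by simp
        have o: "odd z = odd z'" using yy cz by (cases "odd z"; cases "odd z'") simp_all
        have "cd z = cd z'" using yy o by (cases "odd z") simp_all
        then show ?thesis using col_det[OF z4 z4' ci _ o] by simp
      qed
    qed
  qed
qed

lemma sp_vertex:
  assumes "z < n" "4 \<le> n"
  shows "\<exists>w t. 1 \<le> w \<and> w < n \<and> t \<in> {0, 1} \<and> sp s w t = vpos (XX s) (YY s) z \<and>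
           (t = 0 \<longrightarrow> par s w = z) \<and> (t = 1 \<longrightarrow> w = z)"
proof (cases "z = 0")
  case True
  then show ?thesis using assms sp0[of s 1] par_fan[of 1 s] by (intro exI[of _ 1] exI[of _ 0]) auto
next
  case False
  then show ?thesis using assms sp1[of s z] by (intro exI[of _ z] exI[of _ 1]) auto
qed

lemma on_edge:
  assumes w: "1 \<le> w" "w < n" and p: "p \<in> path_image (cc s (pe s w))" and n: "4 \<le> n"
    and z: "z < n" and pz: "p = vpos (XX s) (YY s) z"
  shows "z = par s w \<or> z = w"
proof -
  obtain t where t: "t \<in> {0..1}" "p = sp s w t" using p cc_image[of s w] by auto
  obtain w' t' where w': "1 \<le> w'" "w' < n" "t' \<in> {0, 1}" "sp s w' t' = p"
     "t' = 0 \<longrightarrow> par s w' = z" "t' = 1 \<longrightarrow> w' = z"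
    using sp_vertex[OF z n, of s] pz by auto
  show ?thesis
  proof (cases "w' = w")
    case True
    then show ?thesis using w' by auto
  next
    case False
    have "t = 0 \<or> t = 1" using endpt[OF w(1) w'(1) False[symmetric], of t t' s] t w' by auto
    then have "p = vpos (XX s) (YY s) (par s w) \<or> p = vpos (XX s) (YY s) w" using t sp0 sp1 by auto
    then show ?thesis using pz pos_inj[of s] unfolding inj_def by metis
  qed
qed

lemma drawing:
  assumes "4 \<le> n"
  shows "upward_layered_drawing {0..<n} (EE s n) (XX s) (YY s) (cc s)"
proof -
  have A: "inj_on (vpos (XX s) (YY s)) {0..<n}" using pos_inj[of s] by (simp add: inj_on_def inj_def)
  have B: "\<forall>e\<in>EE s n. path (cc s e) \<and> pathstart (cc s e) = vpos (XX s) (YY s) (fst e) \<and>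
        pathfinish (cc s e) = vpos (XX s) (YY s) (snd e) \<and>
        (\<forall>a b. 0 \<le> a \<and> a < b \<and> b \<le> 1 \<longrightarrow> snd (cc s e a) < snd (cc s e b))"
  proof
    fix e assume "e \<in> EE s n"
    then obtain w where w: "w \<in> {1..<n}" "e = pe s w" unfolding EE_def by auto
    show "path (cc s e) \<and> pathstart (cc s e) = vpos (XX s) (YY s) (fst e) \<and>
        pathfinish (cc s e) = vpos (XX s) (YY s) (snd e) \<and>
        (\<forall>a b. 0 \<le> a \<and> a < b \<and> b \<le> 1 \<longrightarrow> snd (cc s e a) < snd (cc s e b))"
      using cc_props[of w s] w by auto
  qed
  have C: "\<forall>e\<in>EE s n. \<forall>z\<in>{0..<n}. vpos (XX s) (YY s) z \<in> path_image (cc s e) \<longrightarrow> z = fst e \<or> z = snd e"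
  proof (intro ballI impI)
    fix e z assume e: "e \<in> EE s n" and z: "z \<in> {0..<n}" and on: "vpos (XX s) (YY s) z \<in> path_image (cc s e)"
    then obtain w where w: "w \<in> {1..<n}" "e = pe s w" unfolding EE_def by auto
    have "z = par s w \<or> z = w" using on_edge[of w n _ s z] w z on assms by auto
    then show "z = fst e \<or> z = snd e" using w pe_cases[of s w] by auto
  qed
  have D: "\<forall>e\<in>EE s n. \<forall>e'\<in>EE s n. e \<noteq> e' \<longrightarrow> path_image (cc s e) \<inter> path_image (cc s e') \<subseteq>
          vpos (XX s) (YY s) ` ({fst e, snd e} \<inter> {fst e', snd e'})"
  proof (intro ballI impI subsetI)
    fix e e' p assume e: "e \<in> EE s n" and e': "e' \<in> EE s n" and ne: "e \<noteq> e'"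
      and p: "p \<in> path_image (cc s e) \<inter> path_image (cc s e')"
    obtain w where w: "w \<in> {1..<n}" "e = pe s w" using e unfolding EE_def by auto
    obtain w' where w': "w' \<in> {1..<n}" "e' = pe s w'" using e' unfolding EE_def by auto
    have ww: "w \<noteq> w'" using ne w w' by auto
    obtain t where t: "t \<in> {0..1}" "p = sp s w t" using p w cc_image[of s w] by auto
    obtain t' where t': "t' \<in> {0..1}" "p = sp s w' t'" using p w' cc_image[of s w'] by auto
    have "t = 0 \<or> t = 1" using endpt[OF _ _ ww, of t t' s] t t' w w' by auto
    then have "p = vpos (XX s) (YY s) (par s w) \<or> p = vpos (XX s) (YY s) w" using t sp0 sp1 by auto
    then obtain z where z: "z \<in> {par s w, w}" "p = vpos (XX s) (YY s) z" by blast
    have zn: "z < n" using z w par_lt[of w s] by auto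
    have "z = par s w' \<or> z = w'" using on_edge[of w' n p s z] w' p assms zn z by auto
    then have "z \<in> {fst e, snd e} \<inter> {fst e', snd e'}" using z w w' pe_cases[of s w] pe_cases[of s w'] by auto
    then show "p \<in> vpos (XX s) (YY s) ` ({fst e, snd e} \<inter> {fst e', snd e'})" using z by auto
  qed
  show ?thesis unfolding upward_layered_drawing_def using A B C D by (intro conjI) assumption+
qed

definition colv :: "nat \<Rightarrow> nat \<Rightarrow> nat \<Rightarrow> nat" where
  "colv s i j = (if j < s then 6 * (s - j) + 2 * i - 2 else if j = s then i + 1 else 6 * (j - s) + 2 * i - 1)"

lemma six_lemma1: "6 * a + 2 * i = 6 * b + 2 * k \<Longrightarrow> (i::nat) < 3 \<Longrightarrow> k < 3 \<Longrightarrow> i = k"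
  by presburger

lemma six_lemma2: "(6 * a + 2 * i :: nat) \<noteq> 6 * b + 2 * k + 1"
  by presburger

lemma colv_ge4: "j \<noteq> s \<Longrightarrow> j \<le> 2 * s \<Longrightarrow> i < 3 \<Longrightarrow> 4 \<le> colv s i j \<and> colv s i j < 6 * s + 4"
  unfolding colv_def by auto

lemma colv_dist:
  assumes "i < 3" "i' < 3" "j \<le> 2 * s" "j' \<le> 2 * s" "colv s i j = colv s i' j'"
  shows "i = i'"
proof -
  consider "j < s" | "j = s" | "s < j" by linarith
  then show ?thesis
  proof cases
    case 1
    define a where "a = s - j"
    have a: "colv s i j + 2 = 6 * a + 2 * i" "1 \<le> a" using 1 unfolding colv_def a_def by auto
    consider "j' < s" | "j' = s" | "s < j'" by linarith
    then show ?thesis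
    proof cases
      case 1
      define b where "b = s - j'"
      have "colv s i' j' + 2 = 6 * b + 2 * i'" "1 \<le> b" using 1 unfolding colv_def b_def by auto
      then show ?thesis using a assms six_lemma1[of a i b i'] by simp
    next
      case 2 then show ?thesis using a assms \<open>j < s\<close> unfolding colv_def by auto
    next
      case 3
      define b where "b = j' - s"
      have "colv s i' j' + 1 = 6 * b + 2 * i'" "1 \<le> b" using 3 unfolding colv_def b_def by auto
      then show ?thesis using a assms six_lemma2[of a i b i'] by simp
    qed
  next
    case 2
    then have "colv s i j = i + 1" unfolding colv_def by simp
    then show ?thesis using assms colv_ge4[of j' s i'] by (cases "j' = s") (auto simp: colv_def)
  next
    case 3
    define a where "a = j - s"
    have a: "colv s i j + 1 = 6 * a + 2 * i" "1 \<le> a" using 3 unfolding colv_def a_def by auto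
    consider "j' < s" | "j' = s" | "s < j'" by linarith
    then show ?thesis
    proof cases
      case 1
      define b where "b = s - j'"
      have "colv s i' j' + 2 = 6 * b + 2 * i'" "1 \<le> b" using 1 unfolding colv_def b_def by auto
      then show ?thesis using a assms six_lemma2[of b i' a i] by simp
    next
      case 2 then show ?thesis using a assms \<open>s < j\<close> unfolding colv_def by auto
    next
      case 3
      define b where "b = j' - s"
      have "colv s i' j' + 1 = 6 * b + 2 * i'" "1 \<le> b" using 3 unfolding colv_def b_def by auto
      then show ?thesis using a assms six_lemma1[of a i b i'] by simp
    qed
  qed
qed

lemma colv_edge:
  assumes i: "i < 3" and j: "j < 2 * s" and n: "6 * s + 4 \<le> n"
  shows "(colv s i j, colv s i (Suc j)) \<in> EE s n"
proof (cases "j < s")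
  case True
  define w where "w = 6 * (s - j) + 2 * i - 2"
  have cw: "colv s i j = w" unfolding colv_def w_def using True by simp
  have w4: "4 \<le> w" "w < 6 * s + 4" "even w" unfolding w_def using True i by auto
  have pe: "pe s w = (w, par s w)" using w4 by (intro pe_down) auto
  have "par s w = colv s i (Suc j)"
  proof (cases "Suc j = s")
    case True
    have "w = 2 * i + 4" unfolding w_def using True by simp
    then have "par s w = i + 1" using w4 i by (simp add: par_col1)
    then show ?thesis using True unfolding colv_def by simp
  next
    case False
    then have "Suc j < s" using \<open>j < s\<close> by simp
    then have "10 \<le> w" unfolding w_def by auto
    then have "par s w = w - 6" using w4 by (simp add: par_col2)
    also have "\<dots> = colv s i (Suc j)" unfolding colv_def w_def using \<open>Suc j < s\<close> by auto
    finally show ?thesis .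
  qed
  moreover have "w \<in> {1..<n}" using w4 n by auto
  ultimately show ?thesis using cw pe unfolding EE_def by (metis image_eqI)
next
  case False
  define w where "w = 6 * (Suc j - s) + 2 * i - 1"
  have cw: "colv s i (Suc j) = w" unfolding colv_def w_def using False by simp
  have w4: "4 \<le> w" "w < 6 * s + 4" "odd w" unfolding w_def using False i j by auto
  have pe: "pe s w = (par s w, w)" using w4 by (intro pe_up) auto
  have "par s w = colv s i j"
  proof (cases "j = s")
    case True
    have "w = 2 * i + 5" unfolding w_def using True by simp
    then have "par s w = i + 1" using w4 i by (simp add: par_col1)
    then show ?thesis using True unfolding colv_def by simp
  next
    case F2: False
    then have "s < j" using False by simp
    then have "10 \<le> w" unfolding w_def by auto
    then have "par s w = w - 6" using w4 by (simp add: par_col2)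
    also have "\<dots> = colv s i j" unfolding colv_def w_def using \<open>s < j\<close> by auto
    finally show ?thesis .
  qed
  moreover have "w \<in> {1..<n}" using w4 n by auto
  ultimately show ?thesis using cw pe unfolding EE_def by (metis image_eqI)
qed

lemma span_bound:
  assumes "finite E" "drawing_span E y \<le> s"
  shows "\<forall>(a, b) \<in> E. y b - y a \<le> int s"
proof
  fix e assume e: "e \<in> E"
  obtain a b where ab: "e = (a, b)" by fastforce
  have "nat (y b - y a) \<in> insert 0 ((\<lambda>(u, v). nat (y v - y u)) ` E)" using e ab by force
  then have "nat (y b - y a) \<le> drawing_span E y" unfolding drawing_span_def
    using assms(1) by (intro Max_ge) auto
  then show "case e of (a, b) \<Rightarrow> y b - y a \<le> int s" using ab assms(2) by auto
qed

lemma lower_span: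
  assumes n: "6 * s + 4 \<le> n" and dr: "upward_layered_drawing {0..<n} (EE s n) x y c"
  shows "s + 1 \<le> drawing_span (EE s n) y"
proof (rule ccontr)
  assume "\<not> s + 1 \<le> drawing_span (EE s n) y"
  then have "drawing_span (EE s n) y \<le> s" by simp
  then have sp: "\<forall>(a, b) \<in> EE s n. y b - y a \<le> int s"
    using span_bound[of "EE s n"] unfolding EE_def by auto
  have "pe s 1 = (0, 1)" using pe_up[of 1 s] par_fan[of 1 s] by simp
  moreover have "(1::nat) \<in> {1..<n}" using n by simp
  ultimately have e01: "(0, 1) \<in> EE s n" unfolding EE_def by (metis image_eqI)
  show False
  proof (cases "s = 0")
    case True
    have "y 1 - y 0 \<le> int s" using bspec[OF sp e01] by simp
    then show False using edge_y[OF dr e01] True by simp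
  next
    case False
    show False
    proof (rule lower_generic[OF dr, where s=s and u=0 and v="\<lambda>i. i + 1" and col="colv s"])
      show "1 \<le> s" using False by simp
      show "0 \<in> {0..<n}" using n by simp
      show "\<forall>i<3. colv s i s = i + 1" unfolding colv_def by simp
      show "\<forall>i<3. (0, i + 1) \<in> EE s n"
      proof (intro allI impI)
        fix i :: nat assume "i < 3"
        then have "pe s (i + 1) = (0, i + 1)" using pe_up[of "i+1" s] par_fan[of "i+1" s] by simp
        moreover have "i + 1 \<in> {1..<n}" using \<open>i < 3\<close> n by auto
        ultimately show "(0, i + 1) \<in> EE s n" unfolding EE_def by (metis image_eqI)
      qed
      show "\<forall>i<3. \<forall>j. j < 2 * s \<longrightarrow> (colv s i j, colv s i (Suc j)) \<in> EE s n"
        using colv_edge n by auto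
      show "\<forall>i<3. \<forall>j. j \<le> 2 * s \<longrightarrow> colv s i j \<noteq> 0"
        unfolding colv_def by auto
      show "\<forall>i<3. \<forall>i'<3. \<forall>j j'. j \<le> 2 * s \<longrightarrow> j' \<le> 2 * s \<longrightarrow> i \<noteq> i' \<longrightarrow> colv s i j \<noteq> colv s i' j'"
        using colv_dist by blast
      show "\<forall>(a, b) \<in> EE s n. y b - y a \<le> int s" by (rule sp)
    qed
  qed
qed

theorem mainTheorem3:
  fixes l n :: nat
  assumes "l \<ge> 1" and "n \<ge> 3 * l + 4"
  shows "\<exists>(V :: nat set) E. directed_tree V E \<and> card V = n \<and>
           (\<forall>v\<in>V. degree E v \<le> 3) \<and>
           (\<forall>k u w. (u, w) \<in> E ^^ k \<longrightarrow> k \<le> l) \<and>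
           upward_planar V E \<and>
           of_int \<lceil>(real l + 1) / 2\<rceil> \<le> int (dag_span V E)"
proof -
  define s where "s = l div 2"
  have s2: "2 * s \<le> l" "l \<le> 2 * s + 1" unfolding s_def by auto
  have n6: "6 * s + 4 \<le> n" using s2 assms(2) by linarith
  have n4: "4 \<le> n" using n6 by simp
  have dr: "upward_layered_drawing {0..<n} (EE s n) (XX s) (YY s) (cc s)" by (rule drawing[OF n4])
  have ceil: "\<lceil>(real l + 1) / 2\<rceil> = int s + 1"
  proof (rule ceiling_unique)
    have "2 * real s \<le> real l" "real l \<le> 2 * real s + 1" using s2 by linarith+
    then show "of_int (int s + 1) - 1 < (real l + 1) / 2" "(real l + 1) / 2 \<le> of_int (int s + 1)"
      by simp_all
  qed
  have span: "int s + 1 \<le> int (dag_span {0..<n} (EE s n))"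
  proof -
    let ?P = "\<lambda>k. \<exists>x y c. upward_layered_drawing {0..<n} (EE s n) x y c \<and> drawing_span (EE s n) y = k"
    have "?P (drawing_span (EE s n) (YY s))" using dr by blast
    then have "?P (LEAST k. ?P k)" by (rule LeastI)
    then obtain x y c where d: "upward_layered_drawing {0..<n} (EE s n) x y c"
      and k: "drawing_span (EE s n) y = dag_span {0..<n} (EE s n)"
      unfolding dag_span_def by blast
    show ?thesis using lower_span[OF n6 d] k by simp
  qed
  show ?thesis
  proof (intro exI[of _ "{0..<n}"] exI[of _ "EE s n"] conjI)
    show "directed_tree {0..<n} (EE s n)" by (rule dtree[OF n4])
    show "card {0..<n} = n" by simp
    show "\<forall>v\<in>{0..<n}. degree (EE s n) v \<le> 3" using degree_le by auto
    show "\<forall>k u w. (u, w) \<in> EE s n ^^ k \<longrightarrow> k \<le> l"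
      using path_bound[OF _ n6 s2(1) assms(1)] by blast
    show "upward_planar {0..<n} (EE s n)" unfolding upward_planar_def using dr by blast
    show "of_int \<lceil>(real l + 1) / 2\<rceil> \<le> int (dag_span {0..<n} (EE s n))" using ceil span by simp
  qed
qed

end
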